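(* Let $(G,N,\theta)_{\mathcal{H}}$ be a modular $\mathcal{H}$-triple with $E=\mathbb{F}_p[\theta]$, $m=\theta(1)$, let $X:N\to\mathrm{GL}_m(E)=A^\times$ be a representation affording $\theta$ realized over $E$, let $A=\mathrm{M}_m(E)$ be the $G$-algebra associated with $(G,N,\theta)_{\mathcal{H}}$ and $X$, and let $\iota:A\to\mathrm{M}_{ms}(\mathbb{F}_p)$ be a unitary $\mathbb{F}_p$-algebra embedding, where $s=[E:\mathbb{F}_p]$. Then there is a function $Y:G\to\mathrm{GL}_{ms}(\mathbb{F}_p)$ such that (1) $Y(g)^{-1}\iota(x)Y(g)=\iota(x^g)$ for all $x\in A$, $g\in G$; (2) $Y(n)=\iota(X(n))$ for all $n\in N$; (3) $Y(gn)=Y(g)Y(n)$ and $Y(ng)=Y(n)Y(g)$ for all $n\in N$, $g\in G$.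
   Context: $p$ is a prime; $F$ a sufficiently large finite field of characteristic $p$, residue field of a $p$-modular system $(\mathcal{K},\mathcal{O},F)$; $\mathcal{H}$ a group of automorphisms of $\mathcal{K}$ preserving $\mathcal{O}$, acting on $F$ and inducing all automorphisms of $F$. A modular $\mathcal{H}$-triple $(G,N,\theta)_{\mathcal{H}}$: $N\trianglelefteq G$ finite, $\theta\in\mathrm{IBr}(N)$ with $G$-stable $\mathcal{H}$-orbit. $\mathbb{F}_p[\theta]$: subfield of $F$ generated over $\mathbb{F}_p$ by the reductions of the values of $\theta$. The $G$-algebra associated with $(G,N,\theta)_{\mathcal{H}}$ and $X$: for $g\in G$ let $\sigma_g\in\mathrm{Gal}(E/\mathbb{F}_p)$ be the unique element such that $n\mapsto X(gng^{-1})^{\sigma_g}$ (entrywise) affords $\theta$ (equivalently the restriction to $E$ of any $\tau\in\mathcal{H}$ with $\theta^\tau=\theta^{g^{-1}}$, $\theta^{g^{-1}}(n)=\theta(g^{-1}ng)$), choose $T_g\in\mathrm{GL}_m(E)$ with $X(gng^{-1})^{\sigma_g}=T_gX(n)T_g^{-1}$ for all $n\in N$, and let $G$ act on $A=\mathrm{M}_m(E)$ by $x^g=T_g^{-1}x^{\sigma_g}T_g$; this is a right action by $\mathbb{F}_p$-algebra automorphisms, with $X(n)^g=X(g^{-1}ng)$ and $(zx)^g=z^{\sigma_g}x^g$ for $z\in E$. *)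

theory Defs
  imports "Jordan_Normal_Form.Matrix" "HOL-Algebra.Coset" "HOL-Algebra.Multiplicative_Group"
begin

definition mat_trace :: "'a::comm_ring_1 mat \<Rightarrow> 'a" where
  "mat_trace A = (\<Sum>i<dim_row A. A $$ (i, i))"

definition mat_inv :: "'a::comm_ring_1 mat \<Rightarrow> 'a mat" where
  "mat_inv A = (SOME B. B \<in> carrier_mat (dim_row A) (dim_row A) \<and>
                        A * B = 1\<^sub>m (dim_row A) \<and> B * A = 1\<^sub>m (dim_row A))"

text \<open>A field automorphism (an element of Gal(E/F_p) when E is a finite field of char p).\<close>
definition field_aut :: "('e::field \<Rightarrow> 'e) \<Rightarrow> bool" where
  "field_aut \<sigma> \<longleftrightarrow> bij \<sigma> \<and> (\<forall>a b. \<sigma> (a + b) = \<sigma> a + \<sigma> b) \<and>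
                   (\<forall>a b. \<sigma> (a * b) = \<sigma> a * \<sigma> b) \<and> \<sigma> 1 = 1"

definition is_subfield :: "'e::field set \<Rightarrow> bool" where
  "is_subfield F \<longleftrightarrow> 0 \<in> F \<and> 1 \<in> F \<and> (\<forall>a\<in>F. \<forall>b\<in>F. a + b \<in> F \<and> a * b \<in> F) \<and>
                     (\<forall>a\<in>F. - a \<in> F \<and> inverse a \<in> F)"

definition generates_field :: "'e::field set \<Rightarrow> bool" where
  "generates_field S \<longleftrightarrow> (\<forall>F. is_subfield F \<and> S \<subseteq> F \<longrightarrow> F = UNIV)"

definition is_matrep :: "('g, 'b) monoid_scheme \<Rightarrow> nat \<Rightarrow> ('g \<Rightarrow> 'e::field mat) \<Rightarrow> bool" where
  "is_matrep N m X \<longleftrightarrow> (\<forall>n\<in>carrier N. X n \<in> carrier_mat m m \<and> invertible_mat (X n)) \<and>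
     (\<forall>a\<in>carrier N. \<forall>b\<in>carrier N. X (a \<otimes>\<^bsub>N\<^esub> b) = X a * X b)"

text \<open>Absolute irreducibility of X (i.e. X stays irreducible over the algebraic closure),
  expressed via Burnside: the E-linear span of X(N) is the full matrix algebra M_m(E).\<close>
definition abs_irreducible :: "'g set \<Rightarrow> nat \<Rightarrow> ('g \<Rightarrow> 'e::field mat) \<Rightarrow> bool" where
  "abs_irreducible N m X \<longleftrightarrow> 0 < m \<and> (\<forall>M\<in>carrier_mat m m. \<exists>c :: 'g \<Rightarrow> 'e.
      \<forall>i<m. \<forall>j<m. M $$ (i, j) = (\<Sum>n\<in>N. c n * X n $$ (i, j)))"

definition galg_act :: "('g \<Rightarrow> 'e \<Rightarrow> 'e) \<Rightarrow> ('g \<Rightarrow> 'e::field mat) \<Rightarrow> 'g \<Rightarrow> 'e mat \<Rightarrow> 'e mat" where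
  "galg_act \<sigma> T g x = mat_inv (T g) * map_mat (\<sigma> g) x * T g"

end

theory Submission
  imports Defs "HOL-Number_Theory.Residues"
begin

lemma mat_inv_unique:
  fixes A B :: "'a::comm_ring_1 mat"
  assumes A: "A \<in> carrier_mat n n" and B: "B \<in> carrier_mat n n"
    and AB: "A * B = 1\<^sub>m n" and BA: "B * A = 1\<^sub>m n"
  shows "mat_inv A = B"
proof -
  have dr: "dim_row A = n" using A by simp
  let ?P = "\<lambda>B. B \<in> carrier_mat (dim_row A) (dim_row A) \<and> A * B = 1\<^sub>m (dim_row A) \<and> B * A = 1\<^sub>m (dim_row A)"
  have "?P B" using B AB BA dr by simp
  hence P: "?P (mat_inv A)" unfolding mat_inv_def by (rule someI)
  hence C: "mat_inv A \<in> carrier_mat n n" "A * mat_inv A = 1\<^sub>m n" "mat_inv A * A = 1\<^sub>m n" using dr by auto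
  have "mat_inv A = mat_inv A * (A * B)" using C AB by simp
  also have "\<dots> = (mat_inv A * A) * B" using assoc_mult_mat[OF C(1) A B] by simp
  also have "\<dots> = B" using C B by simp
  finally show ?thesis .
qed

lemma invertible_mat_inv:
  fixes A :: "'a::comm_ring_1 mat"
  assumes A: "A \<in> carrier_mat n n" and inv: "invertible_mat A"
  shows "mat_inv A \<in> carrier_mat n n" "A * mat_inv A = 1\<^sub>m n" "mat_inv A * A = 1\<^sub>m n"
proof -
  obtain B where "inverts_mat A B" "inverts_mat B A" using inv unfolding invertible_mat_def by blast
  hence AB: "A * B = 1\<^sub>m n" and BA': "B * A = 1\<^sub>m (dim_row B)" using A by (auto simp: inverts_mat_def)
  have "dim_col (B * A) = n" using A by simp
  hence "dim_row B = n" using BA' by simp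
  moreover have "dim_col (A * B) = dim_col B" by simp
  hence "dim_col B = n" using AB by simp
  ultimately have B: "B \<in> carrier_mat n n" by auto
  with BA' have BA: "B * A = 1\<^sub>m n" by simp
  have "mat_inv A = B" using mat_inv_unique[OF A B AB BA] .
  thus "mat_inv A \<in> carrier_mat n n" "A * mat_inv A = 1\<^sub>m n" "mat_inv A * A = 1\<^sub>m n" using B AB BA by auto
qed

lemma sum_mult_delta[simp]:
  fixes f :: "nat \<Rightarrow> 'a::semiring_1"
  assumes "finite S"
  shows "(\<Sum>k\<in>S. f k * (if k = j then 1 else 0)) = (if j \<in> S then f j else 0)"
    "(\<Sum>k\<in>S. (if k = j then 1 else 0) * f k) = (if j \<in> S then f j else 0)"
proof -
  have "(\<Sum>k\<in>S. f k * (if k = j then 1 else 0)) = (\<Sum>k\<in>S. if k = j then f k else 0)"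
    by (rule sum.cong) auto
  thus "(\<Sum>k\<in>S. f k * (if k = j then 1 else 0)) = (if j \<in> S then f j else 0)"
    using assms by (simp add: sum.delta')
  have "(\<Sum>k\<in>S. (if k = j then 1 else 0) * f k) = (\<Sum>k\<in>S. if k = j then f k else 0)"
    by (rule sum.cong) auto
  thus "(\<Sum>k\<in>S. (if k = j then 1 else 0) * f k) = (if j \<in> S then f j else 0)"
    using assms by (simp add: sum.delta')
qed

lemma mult_unit_vec_index:
  fixes A :: "'a::comm_ring_1 mat"
  assumes A: "A \<in> carrier_mat nr n" and i: "i < nr" and j: "j < n"
  shows "(A *\<^sub>v unit_vec n j) $ i = A $$ (i, j)"
proof -
  have "(A *\<^sub>v unit_vec n j) $ i = (\<Sum>k\<in>{0..<n}. row A i $ k * unit_vec n j $ k)"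
    using A i by (simp add: scalar_prod_def)
  also have "\<dots> = (\<Sum>k\<in>{0..<n}. A $$ (i, k) * (if k = j then 1 else 0))"
    using A i j by (intro sum.cong) auto
  also have "\<dots> = A $$ (i, j)" using j by simp
  finally show ?thesis .
qed

lemma mat_eq_by_vec:
  fixes A B :: "'a::comm_ring_1 mat"
  assumes A: "A \<in> carrier_mat n n" and B: "B \<in> carrier_mat n n"
    and eq: "\<And>v. v \<in> carrier_vec n \<Longrightarrow> A *\<^sub>v v = B *\<^sub>v v"
  shows "A = B"
proof (rule eq_matI)
  fix i j assume i: "i < dim_row B" and j: "j < dim_col B"
  have "A *\<^sub>v unit_vec n j = B *\<^sub>v unit_vec n j" by (rule eq, rule unit_vec_carrier)
  thus "A $$ (i, j) = B $$ (i, j)" using mult_unit_vec_index[OF A, of i j] mult_unit_vec_index[OF B, of i j] A B i j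
    by simp
next
  show "dim_row A = dim_row B" using A B by simp
next
  show "dim_col A = dim_col B" using A B by simp
qed

lemma fp_of_nat:
  assumes p: "prime p" and card: "card (UNIV :: 'fp::{field,finite} set) = p"
  shows "\<exists>k. (a::'fp) = of_nat k"
proof -
  have "CHAR('fp) dvd p" using CHAR_dvd_CARD[where 'a='fp] card by simp
  moreover have "CHAR('fp) \<noteq> 1" by simp
  ultimately have ch: "CHAR('fp) = p" using p CHAR_not_1[where 'a='fp] unfolding prime_nat_iff by auto
  have "inj_on (of_nat :: nat \<Rightarrow> 'fp) {..<p}"
  proof (rule inj_onI)
    fix x y assume "x \<in> {..<p}" "y \<in> {..<p}" "(of_nat x :: 'fp) = of_nat y"
    thus "x = y" using of_nat_eq_iff_cong_CHAR[of x y, where 'a='fp] ch by (simp add: cong_def)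
  qed
  hence "card ((of_nat :: nat \<Rightarrow> 'fp) ` {..<p}) = p" by (simp add: card_image)
  hence "(of_nat :: nat \<Rightarrow> 'fp) ` {..<p} = UNIV" using card
    by (intro card_subset_eq) auto
  thus ?thesis by (metis UNIV_I imageE)
qed

definition trunc_vec :: "nat \<Rightarrow> nat \<Rightarrow> 'a::zero vec \<Rightarrow> 'a vec" where
  "trunc_vec n k v = vec n (\<lambda>i. if i < k then v $ i else 0)"

definition mat_of_fun :: "nat \<Rightarrow> ('a::zero_neq_one vec \<Rightarrow> 'a vec) \<Rightarrow> 'a mat" where
  "mat_of_fun n f = mat n n (\<lambda>(i,j). f (unit_vec n j) $ i)"

lemma mat_of_fun_carrier[simp]: "mat_of_fun n f \<in> carrier_mat n n"
  by (simp add: mat_of_fun_def)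

lemma mat_of_fun_mult:
  fixes f :: "'a::comm_ring_1 vec \<Rightarrow> 'a vec"
  assumes into: "\<And>v. v \<in> carrier_vec n \<Longrightarrow> f v \<in> carrier_vec n"
    and add: "\<And>u v. u \<in> carrier_vec n \<Longrightarrow> v \<in> carrier_vec n \<Longrightarrow> f (u + v) = f u + f v"
    and sm: "\<And>a v. v \<in> carrier_vec n \<Longrightarrow> f (a \<cdot>\<^sub>v v) = a \<cdot>\<^sub>v f v"
    and v: "v \<in> carrier_vec n"
  shows "mat_of_fun n f *\<^sub>v v = f v"
proof -
  have f0: "f (0\<^sub>v n) = 0\<^sub>v n"
  proof -
    have z: "0 \<cdot>\<^sub>v (0\<^sub>v n) = (0\<^sub>v n :: 'a vec)" by (rule eq_vecI) auto
    have "f (0\<^sub>v n) = f (0 \<cdot>\<^sub>v 0\<^sub>v n)" by (simp only: z)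
    also have "\<dots> = 0 \<cdot>\<^sub>v f (0\<^sub>v n)" by (rule sm) simp
    also have "\<dots> = 0\<^sub>v n" using into[of "0\<^sub>v n"] by auto
    finally show ?thesis .
  qed
  have claim: "\<forall>i<n. f (trunc_vec n k v) $ i = (\<Sum>j<k. f (unit_vec n j) $ i * v $ j)" if "k \<le> n" for k
    using that
  proof (induction k)
    case 0
    have "trunc_vec n 0 v = 0\<^sub>v n" by (auto simp: trunc_vec_def)
    thus ?case using f0 by simp
  next
    case (Suc k)
    have eq: "trunc_vec n (Suc k) v = trunc_vec n k v + v $ k \<cdot>\<^sub>v unit_vec n k"
      using Suc.prems by (intro eq_vecI) (auto simp: trunc_vec_def less_Suc_eq)
    have c1: "trunc_vec n k v \<in> carrier_vec n" by (simp add: trunc_vec_def)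
    have c2: "v $ k \<cdot>\<^sub>v unit_vec n k \<in> carrier_vec n" by simp
    have "f (trunc_vec n (Suc k) v) = f (trunc_vec n k v) + v $ k \<cdot>\<^sub>v f (unit_vec n k)"
      unfolding eq add[OF c1 c2] sm[OF unit_vec_carrier] ..
    moreover have "f (trunc_vec n k v) \<in> carrier_vec n" using into c1 by blast
    moreover have "f (unit_vec n k) \<in> carrier_vec n" using into by simp
    ultimately show ?case using Suc by (auto simp: mult.commute)
  qed
  have tn: "trunc_vec n n v = v" using v by (auto simp: trunc_vec_def)
  show ?thesis
  proof (rule eq_vecI)
    fix i assume i: "i < dim_vec (f v)"
    hence i': "i < n" using into[OF v] by simp
    have "(mat_of_fun n f *\<^sub>v v) $ i = (\<Sum>j\<in>{0..<n}. f (unit_vec n j) $ i * v $ j)"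
      using i' v by (simp add: scalar_prod_def mat_of_fun_def)
    also have "\<dots> = f v $ i" using claim[of n] tn i' by (simp add: atLeast0LessThan)
    finally show "(mat_of_fun n f *\<^sub>v v) $ i = f v $ i" .
  next
    show "dim_vec (mat_of_fun n f *\<^sub>v v) = dim_vec (f v)" using into[OF v] by (simp add: mat_of_fun_def)
  qed
qed

lemma smult_mat_mult_vec:
  fixes A :: "'a::comm_ring_1 mat"
  assumes A: "A \<in> carrier_mat nr nc" and v: "v \<in> carrier_vec nc"
  shows "(a \<cdot>\<^sub>m A) *\<^sub>v v = a \<cdot>\<^sub>v (A *\<^sub>v v)"
proof (rule eq_vecI)
  fix i assume "i < dim_vec (a \<cdot>\<^sub>v (A *\<^sub>v v))"
  hence i: "i < nr" using A by simp
  have "((a \<cdot>\<^sub>m A) *\<^sub>v v) $ i = (\<Sum>j\<in>{0..<nc}. a * (A $$ (i, j) * v $ j))"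
    using A v i by (simp add: scalar_prod_def mult.assoc)
  also have "\<dots> = a * (\<Sum>j\<in>{0..<nc}. A $$ (i, j) * v $ j)" by (simp add: sum_distrib_left)
  also have "\<dots> = (a \<cdot>\<^sub>v (A *\<^sub>v v)) $ i" using A v i by (simp add: scalar_prod_def)
  finally show "((a \<cdot>\<^sub>m A) *\<^sub>v v) $ i = (a \<cdot>\<^sub>v (A *\<^sub>v v)) $ i" .
qed (use A in simp)

lemma mult_zero_vec_mat:
  fixes A :: "'a::comm_ring_1 mat"
  assumes A: "A \<in> carrier_mat nr nc"
  shows "A *\<^sub>v (0\<^sub>v nc) = 0\<^sub>v nr"
  using A by (intro eq_vecI) (auto simp: scalar_prod_def)

lemma card_carrier_vec:
  "finite (carrier_vec n :: 'a::finite vec set) \<and> card (carrier_vec n :: 'a vec set) = card (UNIV :: 'a set) ^ n"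
proof -
  let ?f = "\<lambda>v::'a vec. restrict (\<lambda>i. v $ i) {..<n}"
  have bij: "bij_betw ?f (carrier_vec n) ({..<n} \<rightarrow>\<^sub>E (UNIV :: 'a set))"
  proof (rule bij_betw_imageI)
    show "inj_on ?f (carrier_vec n)"
    proof (rule inj_onI)
      fix v w :: "'a vec" assume v: "v \<in> carrier_vec n" and w: "w \<in> carrier_vec n" and e: "?f v = ?f w"
      show "v = w"
      proof (rule eq_vecI)
        fix i assume "i < dim_vec w"
        hence i: "i < n" using w by simp
        have "?f v i = ?f w i" using e by simp
        thus "v $ i = w $ i" using i by simp
      qed (use v w in simp)
    qed
    show "?f ` carrier_vec n = {..<n} \<rightarrow>\<^sub>E UNIV"
    proof
      show "?f ` carrier_vec n \<subseteq> {..<n} \<rightarrow>\<^sub>E UNIV" by (auto simp: PiE_def)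
      show "{..<n} \<rightarrow>\<^sub>E UNIV \<subseteq> ?f ` carrier_vec n"
      proof
        fix g assume g: "g \<in> ({..<n} \<rightarrow>\<^sub>E (UNIV :: 'a set))"
        have "?f (vec n g) = g"
        proof
          fix i show "?f (vec n g) i = g i" using g by (cases "i < n") (auto simp: PiE_def extensional_def)
        qed
        moreover have "vec n g \<in> carrier_vec n" by simp
        ultimately show "g \<in> ?f ` carrier_vec n" by (metis image_eqI)
      qed
    qed
  qed
  have "finite ({..<n} \<rightarrow>\<^sub>E (UNIV :: 'a set))" by (simp add: finite_PiE)
  moreover have "card ({..<n} \<rightarrow>\<^sub>E (UNIV :: 'a set)) = card (UNIV :: 'a set) ^ n" by (simp add: card_PiE)
  ultimately show ?thesis using bij bij_betw_finite bij_betw_same_card by metis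
qed

definition emat :: "nat \<Rightarrow> nat \<Rightarrow> nat \<Rightarrow> 'a::{zero,one} mat" where
  "emat m a b = mat m m (\<lambda>(i,j). if i = a \<and> j = b then 1 else 0)"

definition colmat :: "nat \<Rightarrow> 'a::zero vec \<Rightarrow> 'a mat" where
  "colmat m c = mat m m (\<lambda>(i,j). if j = 0 then c $ i else 0)"

definition scal :: "nat \<Rightarrow> 'a::comm_ring_1 \<Rightarrow> 'a mat" where
  "scal m a = a \<cdot>\<^sub>m 1\<^sub>m m"

lemma emat_carrier[simp]: "emat m a b \<in> carrier_mat m m" by (simp add: emat_def)
lemma colmat_carrier[simp]: "colmat m c \<in> carrier_mat m m" by (simp add: colmat_def)
lemma scal_carrier[simp]: "scal m a \<in> carrier_mat m m" by (simp add: scal_def)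

lemma emat00_idem:
  assumes "0 < m"
  shows "emat m 0 0 * emat m 0 0 = (emat m 0 0 :: 'a::comm_ring_1 mat)"
proof (rule eq_matI)
  fix i j assume ij: "i < dim_row (emat m 0 0 :: 'a mat)" "j < dim_col (emat m 0 0 :: 'a mat)"
  hence "i < m" "j < m" by (auto simp: emat_def)
  thus "(emat m 0 0 * emat m 0 0) $$ (i, j) = (emat m 0 0 :: 'a mat) $$ (i, j)"
    using assms by (simp add: emat_def scalar_prod_def row_def col_def if_distrib[of "\<lambda>x. x * _"] cong: if_cong)
qed (auto simp: emat_def)

lemma emat_colmat:
  fixes c :: "'a::comm_ring_1 vec"
  assumes "0 < m" "i < m"
  shows "emat m 0 i * colmat m c = scal m (c $ i) * emat m 0 0"
proof (rule eq_matI)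
  fix a b assume ab: "a < dim_row (scal m (c $ i) * emat m 0 0)" "b < dim_col (scal m (c $ i) * emat m 0 0)"
  hence a: "a < m" and b: "b < m" by (auto simp: emat_def scal_def)
  have "(emat m 0 i * colmat m c) $$ (a, b) = (\<Sum>l\<in>{0..<m}. (if l = i then (if a = 0 then 1 else 0) else 0) * (if b = 0 then c $ l else 0))"
    using a b by (simp add: emat_def colmat_def scalar_prod_def row_def col_def)
  also have "\<dots> = (\<Sum>l\<in>{0..<m}. if l = i then (if a = 0 then 1 else 0) * (if b = 0 then c $ l else 0) else 0)"
    by (intro sum.cong) auto
  also have "\<dots> = (if a = 0 \<and> b = 0 then c $ i else 0)" using assms by (simp add: sum.delta)
  also have "\<dots> = (scal m (c $ i) * emat m 0 0) $$ (a, b)"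
  proof -
    have "(scal m (c $ i) * emat m 0 0) $$ (a, b) = (\<Sum>l\<in>{0..<m}. c $ i * (if a = l then 1 else 0) * (if l = 0 \<and> b = 0 then 1 else 0))"
      using a b by (simp add: emat_def scal_def scalar_prod_def row_def col_def)
    also have "\<dots> = (\<Sum>l\<in>{0..<m}. if l = a then (if a = 0 \<and> b = 0 then c $ i else 0) else 0)"
      by (intro sum.cong) auto
    also have "\<dots> = (if a = 0 \<and> b = 0 then c $ i else 0)" using a by (simp add: sum.delta)
    finally show ?thesis by simp
  qed
  finally show "(emat m 0 i * colmat m c) $$ (a, b) = (scal m (c $ i) * emat m 0 0) $$ (a, b)" .
qed (auto simp: emat_def scal_def colmat_def)

lemma colmat_mult:
  fixes x :: "'a::comm_ring_1 mat"
  assumes x: "x \<in> carrier_mat m m" and c: "c \<in> carrier_vec m" and m: "0 < m"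
  shows "colmat m (x *\<^sub>v c) = x * colmat m c"
proof (rule eq_matI)
  fix a b assume "a < dim_row (x * colmat m c)" "b < dim_col (x * colmat m c)"
  hence a: "a < m" and b: "b < m" using x by (auto simp: colmat_def)
  have "(x * colmat m c) $$ (a, b) = (\<Sum>l\<in>{0..<m}. x $$ (a, l) * (if b = 0 then c $ l else 0))"
    using a b x by (simp add: colmat_def scalar_prod_def row_def col_def)
  also have "\<dots> = (if b = 0 then (\<Sum>l\<in>{0..<m}. x $$ (a, l) * c $ l) else 0)"
    by (cases "b = 0") auto
  also have "\<dots> = colmat m (x *\<^sub>v c) $$ (a, b)"
    using a b x c by (simp add: colmat_def scalar_prod_def row_def)
  finally show "colmat m (x *\<^sub>v c) $$ (a, b) = (x * colmat m c) $$ (a, b)" by simp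
qed (use x in \<open>auto simp: colmat_def\<close>)

lemma colmat_add:
  "c \<in> carrier_vec m \<Longrightarrow> d \<in> carrier_vec m \<Longrightarrow> colmat m (c + d) = colmat m c + colmat m (d :: 'a::comm_ring_1 vec)"
  by (intro eq_matI) (auto simp: colmat_def)

lemma colmat_smult:
  "c \<in> carrier_vec m \<Longrightarrow> colmat m (a \<cdot>\<^sub>v c) = a \<cdot>\<^sub>m colmat m (c :: 'a::comm_ring_1 vec)"
  by (intro eq_matI) (auto simp: colmat_def)

lemma scal_mult: "scal m a * scal m b = scal m (a * (b :: 'a::comm_ring_1))"
proof -
  have "scal m a * scal m b = b \<cdot>\<^sub>m (a \<cdot>\<^sub>m 1\<^sub>m m)"
    by (simp add: scal_def mult_smult_distrib[of _ m m _ m] mult_smult_assoc_mat[of _ m m _ m])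
  also have "\<dots> = scal m (a * b)" by (intro eq_matI) (auto simp: scal_def)
  finally show ?thesis .
qed

lemma scal_one: "scal m (1::'a::comm_ring_1) = 1\<^sub>m m" by (intro eq_matI) (auto simp: scal_def)

lemma scal_add: "scal m a + scal m b = scal m (a + (b :: 'a::comm_ring_1))"
  by (intro eq_matI) (auto simp: scal_def algebra_simps)

lemma colmat_zero_emat:
  fixes c :: "'a::comm_ring_1 vec"
  assumes "0 < m"
  shows "colmat m c * emat m 0 0 = colmat m c"
proof (rule eq_matI)
  fix a b assume "a < dim_row (colmat m c)" "b < dim_col (colmat m c)"
  hence a: "a < m" and b: "b < m" by (auto simp: colmat_def)
  have "(colmat m c * emat m 0 0) $$ (a, b) = (\<Sum>l\<in>{0..<m}. (if l = 0 then c $ a else 0) * (if l = 0 \<and> b = 0 then 1 else 0))"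
    using a b by (simp add: colmat_def emat_def scalar_prod_def row_def col_def)
  also have "\<dots> = (\<Sum>l\<in>{0..<m}. if l = 0 then (if b = 0 then c $ a else 0) else 0)"
    by (intro sum.cong) auto
  also have "\<dots> = colmat m c $$ (a, b)" using a b assms by (simp add: sum.delta colmat_def)
  finally show "(colmat m c * emat m 0 0) $$ (a, b) = colmat m c $$ (a, b)" .
qed (auto simp: colmat_def emat_def)

lemma mv_assoc:
  fixes A B :: "'a::comm_ring_1 mat"
  shows "A \<in> carrier_mat n n \<Longrightarrow> B \<in> carrier_mat n n \<Longrightarrow> v \<in> carrier_vec n \<Longrightarrow> (A * B) *\<^sub>v v = A *\<^sub>v (B *\<^sub>v v)"
  by (rule assoc_mult_mat_vec)

lemma mvc:
  fixes A :: "'a::comm_ring_1 mat"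
  shows "A \<in> carrier_mat n n \<Longrightarrow> v \<in> carrier_vec n \<Longrightarrow> A *\<^sub>v v \<in> carrier_vec n"
  by (rule mult_mat_vec_carrier)

lemma vec_add_cancel0:
  fixes u v :: "'a::comm_ring_1 vec"
  assumes "u \<in> carrier_vec n" "v \<in> carrier_vec n" "u + v = v"
  shows "u = 0\<^sub>v n"
proof (rule eq_vecI)
  fix i assume "i < dim_vec (0\<^sub>v n :: 'a vec)"
  hence i: "i < n" by simp
  have "(u + v) $ i = v $ i" by (simp only: assms(3))
  moreover have "(u + v) $ i = u $ i + v $ i" using assms(1,2) i by simp
  ultimately show "u $ i = 0\<^sub>v n $ i" using i by simp
qed (use assms in simp)

locale emb =
  fixes m n :: nat and \<iota> :: "'e::field mat \<Rightarrow> 'fp::field mat"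
  assumes m_pos: "0 < m"
    and into: "\<And>x. x \<in> carrier_mat m m \<Longrightarrow> \<iota> x \<in> carrier_mat n n"
    and hadd: "\<And>x y. x \<in> carrier_mat m m \<Longrightarrow> y \<in> carrier_mat m m \<Longrightarrow> \<iota> (x + y) = \<iota> x + \<iota> y"
    and hmult: "\<And>x y. x \<in> carrier_mat m m \<Longrightarrow> y \<in> carrier_mat m m \<Longrightarrow> \<iota> (x * y) = \<iota> x * \<iota> y"
    and hofnat: "\<And>k x. x \<in> carrier_mat m m \<Longrightarrow> \<iota> (of_nat k \<cdot>\<^sub>m x) = of_nat k \<cdot>\<^sub>m \<iota> x"
    and hone: "\<iota> (1\<^sub>m m) = 1\<^sub>m n"
    and he00: "\<iota> (emat m 0 0) \<noteq> 0\<^sub>m n n"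
begin

lemma ic_scal[simp]: "\<iota> (scal m a) \<in> carrier_mat n n" by (rule into) simp
lemma ic_emat[simp]: "\<iota> (emat m a b) \<in> carrier_mat n n" by (rule into) simp
lemma ic_colmat[simp]: "\<iota> (colmat m c) \<in> carrier_mat n n" by (rule into) simp

lemma D_cancel:
  assumes w: "w \<in> carrier_vec n" "w \<noteq> 0\<^sub>v n"
    and eq: "\<iota> (scal m a) *\<^sub>v w = \<iota> (scal m b) *\<^sub>v w"
  shows "a = b"
proof (rule ccontr)
  assume ne: "a \<noteq> b"
  have "\<iota> (scal m (a - b)) + \<iota> (scal m b) = \<iota> (scal m a)"
    using hadd[of "scal m (a - b)" "scal m b"] scal_add[of m "a - b" b] by simp
  hence "\<iota> (scal m (a - b)) *\<^sub>v w + \<iota> (scal m b) *\<^sub>v w = \<iota> (scal m a) *\<^sub>v w"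
    using add_mult_distrib_mat_vec[OF ic_scal ic_scal w(1), of "a - b" b] by simp
  hence "\<iota> (scal m (a - b)) *\<^sub>v w + \<iota> (scal m b) *\<^sub>v w = \<iota> (scal m b) *\<^sub>v w" using eq by simp
  hence z: "\<iota> (scal m (a - b)) *\<^sub>v w = 0\<^sub>v n"
    by (rule vec_add_cancel0[rotated 2]) (use w mvc[OF ic_scal] in auto)
  have "w = 1\<^sub>m n *\<^sub>v w" using w by simp
  also have "\<dots> = \<iota> (scal m (inverse (a - b)) * scal m (a - b)) *\<^sub>v w"
    using ne by (simp add: scal_mult scal_one hone)
  also have "\<dots> = \<iota> (scal m (inverse (a - b))) *\<^sub>v (\<iota> (scal m (a - b)) *\<^sub>v w)"
    using hmult[OF scal_carrier scal_carrier] mv_assoc[OF ic_scal ic_scal w(1)] by simp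
  also have "\<dots> = 0\<^sub>v n" unfolding z by (rule mult_zero_vec_mat[OF ic_scal])
  finally show False using w by simp
qed

lemma exists_w: "\<exists>w\<in>carrier_vec n. w \<noteq> 0\<^sub>v n \<and> \<iota> (emat m 0 0) *\<^sub>v w = w"
proof -
  let ?E = "\<iota> (emat m 0 0)"
  have E: "?E \<in> carrier_mat n n" by (rule into) simp
  obtain i j where ij: "i < n" "j < n" "?E $$ (i, j) \<noteq> 0"
  proof -
    have "\<exists>i<n. \<exists>j<n. ?E $$ (i, j) \<noteq> 0"
    proof (rule ccontr)
      assume "\<not> ?thesis"
      hence "?E = 0\<^sub>m n n" using carrier_matD[OF E] by (intro eq_matI) auto
      thus False using he00 by simp
    qed
    thus ?thesis using that by blast
  qed
  let ?w = "?E *\<^sub>v unit_vec n j"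
  have wc: "?w \<in> carrier_vec n" using mvc[OF E] by simp
  have "?w $ i \<noteq> 0" using mult_unit_vec_index[OF E ij(1) ij(2)] ij(3) by simp
  hence wne: "?w \<noteq> 0\<^sub>v n" using ij(1) by auto
  have "?E *\<^sub>v ?w = (?E * ?E) *\<^sub>v unit_vec n j" using mv_assoc[OF E E unit_vec_carrier] by simp
  also have "?E * ?E = ?E" using hmult[of "emat m 0 0" "emat m 0 0"] emat00_idem[OF m_pos, where 'a='e] by simp
  finally have "?E *\<^sub>v ?w = ?w" .
  thus ?thesis using wc wne by blast
qed

definition Phi :: "'fp vec \<Rightarrow> 'e vec \<Rightarrow> 'fp vec" where
  "Phi w c = \<iota> (colmat m c) *\<^sub>v w"

lemma Phi_carrier: "w \<in> carrier_vec n \<Longrightarrow> Phi w c \<in> carrier_vec n"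
  unfolding Phi_def by (rule mult_mat_vec_carrier[OF ic_colmat])

lemma Phi_add: "w \<in> carrier_vec n \<Longrightarrow> c \<in> carrier_vec m \<Longrightarrow> d \<in> carrier_vec m \<Longrightarrow>
    Phi w (c + d) = Phi w c + Phi w d"
  unfolding Phi_def colmat_add using hadd[OF colmat_carrier colmat_carrier]
    add_mult_distrib_mat_vec[OF into[OF colmat_carrier] into[OF colmat_carrier]] by simp

lemma Phi_ofnat: "w \<in> carrier_vec n \<Longrightarrow> c \<in> carrier_vec m \<Longrightarrow>
    Phi w (of_nat k \<cdot>\<^sub>v c) = of_nat k \<cdot>\<^sub>v Phi w c"
  unfolding Phi_def colmat_smult using hofnat[OF colmat_carrier]
    smult_mat_mult_vec[OF into[OF colmat_carrier]] by simp

lemma Phi_mult: "w \<in> carrier_vec n \<Longrightarrow> c \<in> carrier_vec m \<Longrightarrow> x \<in> carrier_mat m m \<Longrightarrow>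
    Phi w (x *\<^sub>v c) = \<iota> x *\<^sub>v Phi w c"
  unfolding Phi_def using colmat_mult[of x m c] m_pos hmult[OF _ colmat_carrier, of x] mv_assoc[OF into[of x] ic_colmat]
  by simp

lemma Phi_inj:
  assumes w: "w \<in> carrier_vec n" "w \<noteq> 0\<^sub>v n" "\<iota> (emat m 0 0) *\<^sub>v w = w"
  shows "inj_on (Phi w) (carrier_vec m)"
proof (rule inj_onI)
  fix c d assume c: "c \<in> carrier_vec m" and d: "d \<in> carrier_vec m" and e: "Phi w c = Phi w d"
  have key: "\<iota> (emat m 0 i) *\<^sub>v Phi w c = \<iota> (scal m (c $ i)) *\<^sub>v w" if i: "i < m" and c: "c \<in> carrier_vec m" for i c
  proof -
    have "\<iota> (emat m 0 i) *\<^sub>v Phi w c = \<iota> (emat m 0 i * colmat m c) *\<^sub>v w"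
      unfolding Phi_def using hmult[OF emat_carrier colmat_carrier] mv_assoc[OF ic_emat ic_colmat w(1)] by simp
    also have "\<dots> = \<iota> (scal m (c $ i) * emat m 0 0) *\<^sub>v w" by (simp only: emat_colmat[OF m_pos i])
    also have "\<dots> = \<iota> (scal m (c $ i)) *\<^sub>v (\<iota> (emat m 0 0) *\<^sub>v w)"
      using hmult[OF scal_carrier emat_carrier] mv_assoc[OF ic_scal ic_emat w(1)] by simp
    finally show ?thesis using w by simp
  qed
  show "c = d"
  proof (rule eq_vecI)
    fix i assume "i < dim_vec d"
    hence i: "i < m" using d by simp
    have "\<iota> (scal m (c $ i)) *\<^sub>v w = \<iota> (scal m (d $ i)) *\<^sub>v w"
      using key[OF i c] key[OF i d] e by simp
    thus "c $ i = d $ i" using D_cancel w by blast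
  qed (use c d in simp)
qed

end

lemma image_full_by_card:
  fixes f :: "'e::finite vec \<Rightarrow> 'fp::finite vec"
  assumes inj: "inj_on f (carrier_vec m)" and sub: "f ` carrier_vec m \<subseteq> carrier_vec n"
    and card: "card (UNIV::'e set) ^ m = card (UNIV::'fp set) ^ n"
  shows "f ` carrier_vec m = carrier_vec n"
proof (rule card_subset_eq)
  show "finite (carrier_vec n :: 'fp vec set)" using card_carrier_vec by blast
  show "f ` carrier_vec m \<subseteq> carrier_vec n" by fact
  have "card (f ` carrier_vec m) = card (carrier_vec m :: 'e vec set)" using inj by (rule card_image)
  also have "\<dots> = card (carrier_vec n :: 'fp vec set)" using card_carrier_vec[where 'a='e] card_carrier_vec[where 'a='fp] card by simp
  finally show "card (f ` carrier_vec m) = card (carrier_vec n :: 'fp vec set)" .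
qed

lemma skolem_noether:
  fixes \<iota> \<iota>' :: "'e::{field,finite} mat \<Rightarrow> 'fp::{field,finite} mat"
  assumes e1: "emb m n \<iota>" and e2: "emb m n \<iota>'"
    and card: "card (UNIV::'e set) ^ m = card (UNIV::'fp set) ^ n"
    and ofn: "\<And>a::'fp. \<exists>k. a = of_nat k"
  shows "\<exists>Y Z. Y \<in> carrier_mat n n \<and> Z \<in> carrier_mat n n \<and> Y * Z = 1\<^sub>m n \<and> Z * Y = 1\<^sub>m n \<and>
           (\<forall>x\<in>carrier_mat m m. \<iota> x * Y = Y * \<iota>' x)"
proof -
  interpret A: emb m n \<iota> by (rule e1)
  interpret B: emb m n \<iota>' by (rule e2)
  obtain w where w: "w \<in> carrier_vec n" "w \<noteq> 0\<^sub>v n" "\<iota> (emat m 0 0) *\<^sub>v w = w" using A.exists_w by blast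
  obtain w' where w': "w' \<in> carrier_vec n" "w' \<noteq> 0\<^sub>v n" "\<iota>' (emat m 0 0) *\<^sub>v w' = w'" using B.exists_w by blast
  define F where "F = A.Phi w"
  define G where "G = B.Phi w'"
  have Finj: "inj_on F (carrier_vec m)" unfolding F_def using A.Phi_inj[OF w] .
  have Ginj: "inj_on G (carrier_vec m)" unfolding G_def using B.Phi_inj[OF w'] .
  have Fc: "F c \<in> carrier_vec n" for c unfolding F_def using A.Phi_carrier[OF w(1)] .
  have Gc: "G c \<in> carrier_vec n" for c unfolding G_def using B.Phi_carrier[OF w'(1)] .
  have Fim: "F ` carrier_vec m = carrier_vec n" using image_full_by_card[OF Finj _ card] Fc by blast
  have Gim: "G ` carrier_vec m = carrier_vec n" using image_full_by_card[OF Ginj _ card] Gc by blast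
  have Fadd: "F (c + d) = F c + F d" if "c \<in> carrier_vec m" "d \<in> carrier_vec m" for c d
    unfolding F_def using A.Phi_add[OF w(1) that] .
  have Gadd: "G (c + d) = G c + G d" if "c \<in> carrier_vec m" "d \<in> carrier_vec m" for c d
    unfolding G_def using B.Phi_add[OF w'(1) that] .
  have Fsm: "F (of_nat k \<cdot>\<^sub>v c) = of_nat k \<cdot>\<^sub>v F c" if "c \<in> carrier_vec m" for c k
    unfolding F_def using A.Phi_ofnat[OF w(1) that] .
  have Gsm: "G (of_nat k \<cdot>\<^sub>v c) = of_nat k \<cdot>\<^sub>v G c" if "c \<in> carrier_vec m" for c k
    unfolding G_def using B.Phi_ofnat[OF w'(1) that] .
  have Fmul: "F (x *\<^sub>v c) = \<iota> x *\<^sub>v F c" if "c \<in> carrier_vec m" "x \<in> carrier_mat m m" for c x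
    unfolding F_def using A.Phi_mult[OF w(1) that] .
  have Gmul: "G (x *\<^sub>v c) = \<iota>' x *\<^sub>v G c" if "c \<in> carrier_vec m" "x \<in> carrier_mat m m" for c x
    unfolding G_def using B.Phi_mult[OF w'(1) that] .
  have transfer: "\<exists>h. (\<forall>v\<in>carrier_vec n. h v \<in> carrier_vec n) \<and>
      (\<forall>u\<in>carrier_vec n. \<forall>v\<in>carrier_vec n. h (u + v) = h u + h v) \<and>
      (\<forall>a. \<forall>v\<in>carrier_vec n. h (a \<cdot>\<^sub>v v) = a \<cdot>\<^sub>v h v) \<and>
      (\<forall>c\<in>carrier_vec m. h (f2 c) = f1 c)"
    if inj2: "inj_on f2 (carrier_vec m)" and im2: "f2 ` carrier_vec m = carrier_vec n"
      and c1: "\<And>c. f1 c \<in> carrier_vec n"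
      and add1: "\<And>c d. c \<in> carrier_vec m \<Longrightarrow> d \<in> carrier_vec m \<Longrightarrow> f1 (c + d) = f1 c + f1 d"
      and add2: "\<And>c d. c \<in> carrier_vec m \<Longrightarrow> d \<in> carrier_vec m \<Longrightarrow> f2 (c + d) = f2 c + f2 d"
      and sm1: "\<And>c k. c \<in> carrier_vec m \<Longrightarrow> f1 (of_nat k \<cdot>\<^sub>v c) = of_nat k \<cdot>\<^sub>v f1 c"
      and sm2: "\<And>c k. c \<in> carrier_vec m \<Longrightarrow> f2 (of_nat k \<cdot>\<^sub>v c) = of_nat k \<cdot>\<^sub>v f2 c"
    for f1 f2 :: "'e vec \<Rightarrow> 'fp vec"
  proof -
    define gi where "gi = the_inv_into (carrier_vec m) f2"
    have gi_c: "gi v \<in> carrier_vec m" if "v \<in> carrier_vec n" for v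
      unfolding gi_def using the_inv_into_into[OF inj2, of v "carrier_vec m"] that im2 by simp
    have gi_r: "f2 (gi v) = v" if "v \<in> carrier_vec n" for v
      unfolding gi_def using f_the_inv_into_f[OF inj2, of v] that im2 by simp
    have gi_l: "gi (f2 c) = c" if "c \<in> carrier_vec m" for c
      unfolding gi_def using the_inv_into_f_f[OF inj2 that] .
    have gi_add: "gi (u + v) = gi u + gi v" if "u \<in> carrier_vec n" "v \<in> carrier_vec n" for u v
    proof -
      have "f2 (gi u + gi v) = u + v" using add2[OF gi_c gi_c] gi_r that by simp
      hence "gi (u + v) = gi (f2 (gi u + gi v))" by simp
      also have "\<dots> = gi u + gi v" using gi_l gi_c that by simp
      finally show ?thesis .
    qed
    have gi_sm: "gi (of_nat k \<cdot>\<^sub>v v) = of_nat k \<cdot>\<^sub>v gi v" if "v \<in> carrier_vec n" for v k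
    proof -
      have "f2 (of_nat k \<cdot>\<^sub>v gi v) = of_nat k \<cdot>\<^sub>v v" using sm2[OF gi_c] gi_r that by simp
      hence "gi (of_nat k \<cdot>\<^sub>v v) = gi (f2 (of_nat k \<cdot>\<^sub>v gi v))" by simp
      also have "\<dots> = of_nat k \<cdot>\<^sub>v gi v" using gi_l gi_c that by simp
      finally show ?thesis .
    qed
    define h where "h = (\<lambda>v. f1 (gi v))"
    have "\<forall>v\<in>carrier_vec n. h v \<in> carrier_vec n" unfolding h_def using c1 by simp
    moreover have "\<forall>u\<in>carrier_vec n. \<forall>v\<in>carrier_vec n. h (u + v) = h u + h v"
      unfolding h_def using gi_add add1 gi_c by simp
    moreover have "\<forall>a. \<forall>v\<in>carrier_vec n. h (a \<cdot>\<^sub>v v) = a \<cdot>\<^sub>v h v"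
    proof (intro allI ballI)
      fix a :: 'fp and v :: "'fp vec" assume v: "v \<in> carrier_vec n"
      obtain k where k: "a = of_nat k" using ofn by blast
      show "h (a \<cdot>\<^sub>v v) = a \<cdot>\<^sub>v h v" unfolding h_def k using gi_sm[OF v] sm1[OF gi_c[OF v]] by simp
    qed
    moreover have "\<forall>c\<in>carrier_vec m. h (f2 c) = f1 c" unfolding h_def using gi_l by simp
    ultimately show ?thesis by blast
  qed
  obtain y where y: "\<forall>v\<in>carrier_vec n. y v \<in> carrier_vec n"
      "\<forall>u\<in>carrier_vec n. \<forall>v\<in>carrier_vec n. y (u + v) = y u + y v"
      "\<forall>a. \<forall>v\<in>carrier_vec n. y (a \<cdot>\<^sub>v v) = a \<cdot>\<^sub>v y v"
      "\<forall>c\<in>carrier_vec m. y (G c) = F c"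
    using transfer[OF Ginj Gim Fc Fadd Gadd Fsm Gsm] by blast
  obtain z where z: "\<forall>v\<in>carrier_vec n. z v \<in> carrier_vec n"
      "\<forall>u\<in>carrier_vec n. \<forall>v\<in>carrier_vec n. z (u + v) = z u + z v"
      "\<forall>a. \<forall>v\<in>carrier_vec n. z (a \<cdot>\<^sub>v v) = a \<cdot>\<^sub>v z v"
      "\<forall>c\<in>carrier_vec m. z (F c) = G c"
    using transfer[OF Finj Fim Gc Gadd Fadd Gsm Fsm] by blast
  have yc: "\<And>v. v \<in> carrier_vec n \<Longrightarrow> y v \<in> carrier_vec n" using y(1) by blast
  have yadd: "\<And>u v. u \<in> carrier_vec n \<Longrightarrow> v \<in> carrier_vec n \<Longrightarrow> y (u + v) = y u + y v" using y(2) by blast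
  have ysm: "\<And>a v. v \<in> carrier_vec n \<Longrightarrow> y (a \<cdot>\<^sub>v v) = a \<cdot>\<^sub>v y v" using y(3) by blast
  have yG: "\<And>c. c \<in> carrier_vec m \<Longrightarrow> y (G c) = F c" using y(4) by blast
  have zc: "\<And>v. v \<in> carrier_vec n \<Longrightarrow> z v \<in> carrier_vec n" using z(1) by blast
  have zadd: "\<And>u v. u \<in> carrier_vec n \<Longrightarrow> v \<in> carrier_vec n \<Longrightarrow> z (u + v) = z u + z v" using z(2) by blast
  have zsm: "\<And>a v. v \<in> carrier_vec n \<Longrightarrow> z (a \<cdot>\<^sub>v v) = a \<cdot>\<^sub>v z v" using z(3) by blast
  have zF: "\<And>c. c \<in> carrier_vec m \<Longrightarrow> z (F c) = G c" using z(4) by blast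
  define Y where "Y = mat_of_fun n y"
  define Z where "Z = mat_of_fun n z"
  have Yv: "Y *\<^sub>v v = y v" if "v \<in> carrier_vec n" for v
    unfolding Y_def by (rule mat_of_fun_mult[OF yc yadd ysm that])
  have Zv: "Z *\<^sub>v v = z v" if "v \<in> carrier_vec n" for v
    unfolding Z_def by (rule mat_of_fun_mult[OF zc zadd zsm that])
  have Yc: "Y \<in> carrier_mat n n" and Zc: "Z \<in> carrier_mat n n" unfolding Y_def Z_def by simp_all
  have yz: "y (z v) = v" if "v \<in> carrier_vec n" for v
  proof -
    have "v \<in> F ` carrier_vec m" using Fim that by simp
    then obtain c where c: "c \<in> carrier_vec m" "v = F c" by (rule imageE) simp
    show ?thesis using c zF yG by simp
  qed
  have zy: "z (y v) = v" if "v \<in> carrier_vec n" for v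
  proof -
    have "v \<in> G ` carrier_vec m" using Gim that by simp
    then obtain c where c: "c \<in> carrier_vec m" "v = G c" by (rule imageE) simp
    show ?thesis using c zF yG by simp
  qed
  have YZ: "Y * Z = 1\<^sub>m n"
  proof (rule mat_eq_by_vec)
    fix v :: "'fp vec" assume v: "v \<in> carrier_vec n"
    have "(Y * Z) *\<^sub>v v = Y *\<^sub>v (Z *\<^sub>v v)" using mv_assoc[OF Yc Zc v] .
    also have "\<dots> = v" using Zv[OF v] Yv[OF zc[OF v]] yz[OF v] by simp
    finally show "(Y * Z) *\<^sub>v v = 1\<^sub>m n *\<^sub>v v" using v by simp
  qed (use Yc Zc in simp_all)
  have ZY: "Z * Y = 1\<^sub>m n"
  proof (rule mat_eq_by_vec)
    fix v :: "'fp vec" assume v: "v \<in> carrier_vec n"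
    have "(Z * Y) *\<^sub>v v = Z *\<^sub>v (Y *\<^sub>v v)" using mv_assoc[OF Zc Yc v] .
    also have "\<dots> = v" using Yv[OF v] Zv[OF yc[OF v]] zy[OF v] by simp
    finally show "(Z * Y) *\<^sub>v v = 1\<^sub>m n *\<^sub>v v" using v by simp
  qed (use Yc Zc in simp_all)
  have inter: "\<iota> x * Y = Y * \<iota>' x" if x: "x \<in> carrier_mat m m" for x
  proof (rule mat_eq_by_vec)
    show "\<iota> x * Y \<in> carrier_mat n n" using A.into[OF x] Yc by simp
    show "Y * \<iota>' x \<in> carrier_mat n n" using B.into[OF x] Yc by simp
    fix v :: "'fp vec" assume v: "v \<in> carrier_vec n"
    have "v \<in> G ` carrier_vec m" using Gim v by simp
    then obtain c where c: "c \<in> carrier_vec m" "v = G c" by (rule imageE) simp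
    have xc: "x *\<^sub>v c \<in> carrier_vec m" using x c by simp
    have "(\<iota> x * Y) *\<^sub>v v = \<iota> x *\<^sub>v (Y *\<^sub>v v)" using mv_assoc[OF A.into[OF x] Yc v] .
    also have "\<dots> = \<iota> x *\<^sub>v F c" using Yv[OF v] c yG by simp
    also have "\<dots> = F (x *\<^sub>v c)" using Fmul[OF c(1) x] by simp
    also have "\<dots> = y (G (x *\<^sub>v c))" using yG[OF xc] by simp
    also have "\<dots> = y (\<iota>' x *\<^sub>v v)" using Gmul[OF c(1) x] c by simp
    also have "\<dots> = Y *\<^sub>v (\<iota>' x *\<^sub>v v)" using Yv[OF mvc[OF B.into[OF x] v]] by simp
    also have "\<dots> = (Y * \<iota>' x) *\<^sub>v v" using mv_assoc[OF Yc B.into[OF x] v] by simp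
    finally show "(\<iota> x * Y) *\<^sub>v v = (Y * \<iota>' x) *\<^sub>v v" .
  qed
  show ?thesis using Yc Zc YZ ZY inter by blast
qed

lemma fa_0: "field_aut \<sigma> \<Longrightarrow> \<sigma> 0 = 0"
  unfolding field_aut_def by (metis add_cancel_right_right add_0)

lemma fa_add: "field_aut \<sigma> \<Longrightarrow> \<sigma> (a + b) = \<sigma> a + \<sigma> b" unfolding field_aut_def by blast
lemma fa_mult: "field_aut \<sigma> \<Longrightarrow> \<sigma> (a * b) = \<sigma> a * \<sigma> b" unfolding field_aut_def by blast
lemma fa_1: "field_aut \<sigma> \<Longrightarrow> \<sigma> 1 = 1" unfolding field_aut_def by blast

lemma fa_neg: assumes "field_aut \<sigma>" shows "\<sigma> (- a) = - \<sigma> a"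
proof -
  have "\<sigma> (- a) + \<sigma> a = 0" using fa_add[OF assms, of "- a" a] fa_0[OF assms] by simp
  thus ?thesis by (simp add: eq_neg_iff_add_eq_0)
qed

lemma fa_inv: assumes "field_aut \<sigma>" shows "\<sigma> (inverse a) = inverse (\<sigma> (a::'a::field))"
proof (cases "a = 0")
  case True thus ?thesis using fa_0[OF assms] by simp
next
  case False
  have "\<sigma> (inverse a) * \<sigma> a = 1" using fa_mult[OF assms, of "inverse a" a] fa_1[OF assms] False by simp
  thus ?thesis by (metis inverse_unique mult.commute)
qed

lemma fa_sum: assumes "field_aut \<sigma>" shows "\<sigma> (sum f A) = (\<Sum>x\<in>A. \<sigma> (f x))"
proof (cases "finite A")
  case True thus ?thesis
    by (induction A rule: finite_induct) (simp_all add: fa_0[OF assms] fa_add[OF assms])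
next
  case False thus ?thesis using fa_0[OF assms] by simp
qed

lemma fa_ofnat: assumes "field_aut \<sigma>" shows "\<sigma> (of_nat k) = of_nat k"
  by (induction k) (simp_all add: fa_0[OF assms] fa_add[OF assms] fa_1[OF assms])

lemma fa_id: "field_aut (\<lambda>x::'a::field. x)"
  unfolding field_aut_def by (simp add: bij_id[unfolded id_def])

lemma mm_mult:
  assumes s: "field_aut \<sigma>" and A: "A \<in> carrier_mat a b" and B: "B \<in> carrier_mat b c"
  shows "map_mat \<sigma> (A * B) = map_mat \<sigma> A * map_mat \<sigma> B"
proof (rule eq_matI)
  fix i j assume "i < dim_row (map_mat \<sigma> A * map_mat \<sigma> B)" "j < dim_col (map_mat \<sigma> A * map_mat \<sigma> B)"
  hence i: "i < a" and j: "j < c" using A B by auto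
  show "map_mat \<sigma> (A * B) $$ (i, j) = (map_mat \<sigma> A * map_mat \<sigma> B) $$ (i, j)"
    using A B i j by (simp add: scalar_prod_def fa_sum[OF s] fa_mult[OF s])
qed (use A B in auto)

lemma mm_add:
  assumes s: "field_aut \<sigma>" and A: "A \<in> carrier_mat a b" and B: "B \<in> carrier_mat a b"
  shows "map_mat \<sigma> (A + B) = map_mat \<sigma> A + map_mat \<sigma> B"
  using A B by (intro eq_matI) (auto simp: fa_add[OF s])

lemma mm_one:
  assumes s: "field_aut \<sigma>" shows "map_mat \<sigma> (1\<^sub>m m) = 1\<^sub>m m"
  by (intro eq_matI) (auto simp: fa_0[OF s] fa_1[OF s])

lemma mm_ofnat:
  assumes s: "field_aut \<sigma>" and A: "A \<in> carrier_mat a b"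
  shows "map_mat \<sigma> (of_nat k \<cdot>\<^sub>m A) = of_nat k \<cdot>\<^sub>m map_mat \<sigma> A"
  using A by (intro eq_matI) (auto simp: fa_mult[OF s] fa_ofnat[OF s])

lemma mm_id: "map_mat (\<lambda>x. x) A = A"
  by (intro eq_matI) auto

lemma mm_trace:
  assumes s: "field_aut \<sigma>" and A: "A \<in> carrier_mat m m"
  shows "mat_trace (map_mat \<sigma> A) = \<sigma> (mat_trace A)"
  unfolding mat_trace_def fa_sum[OF s] using A by (intro sum.cong) auto

lemma trace_comm:
  fixes A B :: "'a::comm_ring_1 mat"
  assumes A: "A \<in> carrier_mat m k" and B: "B \<in> carrier_mat k m"
  shows "mat_trace (A * B) = mat_trace (B * A)"
proof -
  have "mat_trace (A * B) = (\<Sum>i<m. \<Sum>j<k. A $$ (i, j) * B $$ (j, i))"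
    using A B unfolding mat_trace_def by (simp add: scalar_prod_def atLeast0LessThan)
  also have "\<dots> = (\<Sum>j<k. \<Sum>i<m. B $$ (j, i) * A $$ (i, j))"
    by (subst sum.swap) (simp add: mult.commute)
  also have "\<dots> = mat_trace (B * A)"
    using A B unfolding mat_trace_def by (simp add: scalar_prod_def atLeast0LessThan)
  finally show ?thesis .
qed

lemma fixed_subfield:
  assumes s: "field_aut \<sigma>" and t: "field_aut \<tau>"
  shows "is_subfield {a::'a::field. \<sigma> a = \<tau> a}"
  unfolding is_subfield_def
  using fa_0[OF s] fa_0[OF t] fa_1[OF s] fa_1[OF t] fa_add[OF s] fa_add[OF t] fa_mult[OF s] fa_mult[OF t]
    fa_neg[OF s] fa_neg[OF t] fa_inv[OF s] fa_inv[OF t] by simp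

lemma central_from_irred:
  fixes X :: "'g \<Rightarrow> 'e::field mat"
  assumes irr: "abs_irreducible N m X" and fin: "finite N"
    and Xc: "\<And>k. k \<in> N \<Longrightarrow> X k \<in> carrier_mat m m"
    and Dc: "D \<in> carrier_mat m m"
    and comm: "\<And>k. k \<in> N \<Longrightarrow> D * X k = X k * D"
    and M: "M \<in> carrier_mat m m"
  shows "D * M = M * D"
proof -
  obtain c where c: "\<forall>i<m. \<forall>j<m. M $$ (i, j) = (\<Sum>k\<in>N. c k * X k $$ (i, j))"
    using irr M unfolding abs_irreducible_def by blast
  show ?thesis
  proof (rule eq_matI)
    fix i j assume "i < dim_row (M * D)" "j < dim_col (M * D)"
    hence i: "i < m" and j: "j < m" using M Dc by auto
    have "(D * M) $$ (i, j) = (\<Sum>l\<in>{0..<m}. D $$ (i, l) * M $$ (l, j))"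
      using Dc M i j by (simp add: scalar_prod_def)
    also have "\<dots> = (\<Sum>l\<in>{0..<m}. D $$ (i, l) * (\<Sum>k\<in>N. c k * X k $$ (l, j)))"
      using c j by (intro sum.cong) auto
    also have "\<dots> = (\<Sum>k\<in>N. c k * (\<Sum>l\<in>{0..<m}. D $$ (i, l) * X k $$ (l, j)))"
      by (simp add: sum_distrib_left sum.swap[of _ N] mult.left_commute)
    also have "\<dots> = (\<Sum>k\<in>N. c k * (D * X k) $$ (i, j))"
    proof (intro sum.cong refl)
      fix k assume k: "k \<in> N"
      show "c k * (\<Sum>l\<in>{0..<m}. D $$ (i, l) * X k $$ (l, j)) = c k * (D * X k) $$ (i, j)"
        using Dc Xc[OF k] i j by (simp add: scalar_prod_def)
    qed
    also have "\<dots> = (\<Sum>k\<in>N. c k * (X k * D) $$ (i, j))"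
      using comm by simp
    also have "\<dots> = (\<Sum>k\<in>N. c k * (\<Sum>l\<in>{0..<m}. X k $$ (i, l) * D $$ (l, j)))"
    proof (intro sum.cong refl)
      fix k assume k: "k \<in> N"
      show "c k * (X k * D) $$ (i, j) = c k * (\<Sum>l\<in>{0..<m}. X k $$ (i, l) * D $$ (l, j))"
        using Dc Xc[OF k] i j by (simp add: scalar_prod_def)
    qed
    also have "\<dots> = (\<Sum>l\<in>{0..<m}. (\<Sum>k\<in>N. c k * X k $$ (i, l)) * D $$ (l, j))"
      by (simp add: sum_distrib_left sum_distrib_right sum.swap[of _ N] mult.assoc)
    also have "\<dots> = (\<Sum>l\<in>{0..<m}. M $$ (i, l) * D $$ (l, j))"
      using c i by (intro sum.cong) auto
    also have "\<dots> = (M * D) $$ (i, j)"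
      using Dc M i j by (simp add: scalar_prod_def)
    finally show "(D * M) $$ (i, j) = (M * D) $$ (i, j)" .
  qed (use M Dc in auto)
qed

locale setting = group +
  fixes N :: "'a set" and m :: nat and X :: "'a \<Rightarrow> 'e::field mat" and S :: "'e set"
  assumes nrm: "N \<lhd> G" and finN: "finite N"
    and Xc: "\<And>k. k \<in> N \<Longrightarrow> X k \<in> carrier_mat m m"
    and Xmul: "\<And>a b. a \<in> N \<Longrightarrow> b \<in> N \<Longrightarrow> X (a \<otimes> b) = X a * X b"
    and Xinvt: "\<And>k. k \<in> N \<Longrightarrow> invertible_mat (X k)"
    and irr: "abs_irreducible N m X"
    and gen: "generates_field S"
    and Ssub: "S \<subseteq> {mat_trace (X k) | k. k \<in> N}"
begin

lemma sg: "subgroup N G" using nrm normal_imp_subgroup by blast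

lemma N_carrier: "k \<in> N \<Longrightarrow> k \<in> carrier G" using subgroup.mem_carrier[OF sg] by blast

lemma conj_in: "g \<in> carrier G \<Longrightarrow> k \<in> N \<Longrightarrow> g \<otimes> k \<otimes> inv g \<in> N"
  using normal.inv_op_closed2[OF nrm] by blast

lemma conj_in': "g \<in> carrier G \<Longrightarrow> k \<in> N \<Longrightarrow> inv g \<otimes> k \<otimes> g \<in> N"
  using normal.inv_op_closed1[OF nrm] by blast

lemma conj_back: "g \<in> carrier G \<Longrightarrow> k \<in> carrier G \<Longrightarrow> g \<otimes> (inv g \<otimes> k \<otimes> g) \<otimes> inv g = k"
  by (simp add: m_assoc) (simp add: m_assoc[symmetric])

lemma X1: "X \<one> = 1\<^sub>m m"
proof -
  have one: "\<one> \<in> N" using subgroup.one_closed[OF sg] .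
  define B where "B = mat_inv (X \<one>)"
  have Bc: "B \<in> carrier_mat m m" and B: "X \<one> * B = 1\<^sub>m m"
    using invertible_mat_inv[OF Xc[OF one] Xinvt[OF one]] unfolding B_def by auto
  have idem: "X \<one> * X \<one> = X \<one>"
  proof -
    have "X \<one> * X \<one> = X (\<one> \<otimes> \<one>)" by (rule Xmul[OF one one, symmetric])
    also have "\<one> \<otimes> \<one> = \<one>" by simp
    finally show ?thesis .
  qed
  have "X \<one> = X \<one> * (X \<one> * B)" using B Xc[OF one] by simp
  also have "\<dots> = (X \<one> * X \<one>) * B" using assoc_mult_mat[OF Xc[OF one] Xc[OF one] Bc] by simp
  also have "\<dots> = 1\<^sub>m m" unfolding idem by (rule B)
  finally show ?thesis .
qed

lemma Xinv_l: assumes k: "k \<in> N" shows "X (inv k) * X k = 1\<^sub>m m"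
proof -
  have ik: "inv k \<in> N" using subgroup.m_inv_closed[OF sg k] .
  have "X (inv k) * X k = X (inv k \<otimes> k)" by (rule Xmul[OF ik k, symmetric])
  also have "inv k \<otimes> k = \<one>" using N_carrier[OF k] by simp
  finally show ?thesis using X1 by simp
qed

lemma Xinv_r: assumes k: "k \<in> N" shows "X k * X (inv k) = 1\<^sub>m m"
proof -
  have ik: "inv k \<in> N" using subgroup.m_inv_closed[OF sg k] .
  have "X k * X (inv k) = X (k \<otimes> inv k)" by (rule Xmul[OF k ik, symmetric])
  also have "k \<otimes> inv k = \<one>" using N_carrier[OF k] by simp
  finally show ?thesis using X1 by simp
qed

lemma unique:
  assumes g: "g \<in> carrier G" and s: "field_aut \<sigma>" and t: "field_aut \<tau>"
    and T: "T \<in> carrier_mat m m" and Ti: "Ti \<in> carrier_mat m m" and TTi: "T * Ti = 1\<^sub>m m" and TiT: "Ti * T = 1\<^sub>m m"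
    and T': "T' \<in> carrier_mat m m" and Ti': "Ti' \<in> carrier_mat m m" and TTi': "T' * Ti' = 1\<^sub>m m" and TiT': "Ti' * T' = 1\<^sub>m m"
    and hs: "\<And>k. k \<in> N \<Longrightarrow> map_mat \<sigma> (X (g \<otimes> k \<otimes> inv g)) = T * X k * Ti"
    and ht: "\<And>k. k \<in> N \<Longrightarrow> map_mat \<tau> (X (g \<otimes> k \<otimes> inv g)) = T' * X k * Ti'"
    and x: "x \<in> carrier_mat m m"
  shows "Ti * map_mat \<sigma> x * T = Ti' * map_mat \<tau> x * T'"
proof -
  have c1: "T * (Ti * M) = M" if "M \<in> carrier_mat m m" for M
    using that T Ti TTi by (simp add: assoc_mult_mat[of _ m m _ m _ m, symmetric])
  have c2: "Ti * (T * M) = M" if "M \<in> carrier_mat m m" for M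
    using that T Ti TiT by (simp add: assoc_mult_mat[of _ m m _ m _ m, symmetric])
  have c3: "T' * (Ti' * M) = M" if "M \<in> carrier_mat m m" for M
    using that T' Ti' TTi' by (simp add: assoc_mult_mat[of _ m m _ m _ m, symmetric])
  have c4: "Ti' * (T' * M) = M" if "M \<in> carrier_mat m m" for M
    using that T' Ti' TiT' by (simp add: assoc_mult_mat[of _ m m _ m _ m, symmetric])
  note cs = c1 c2 c3 c4 TTi TiT TTi' TiT' T Ti T' Ti'
  have conj: "\<exists>k'\<in>N. g \<otimes> k' \<otimes> inv g = k" if k: "k \<in> N" for k
    using conj_in'[OF g k] conj_back[OF g N_carrier[OF k]] by blast
  have trs: "\<sigma> (mat_trace (X k)) = \<tau> (mat_trace (X k))" if k: "k \<in> N" for k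
  proof -
    obtain k' where k': "k' \<in> N" "g \<otimes> k' \<otimes> inv g = k" using conj[OF k] by blast
    have Xk': "X k' \<in> carrier_mat m m" using Xc[OF k'(1)] .
    have "\<sigma> (mat_trace (X k)) = mat_trace (map_mat \<sigma> (X k))" using mm_trace[OF s Xc[OF k]] by simp
    also have "\<dots> = mat_trace (T * X k' * Ti)" using hs[OF k'(1)] k'(2) by simp
    also have "\<dots> = mat_trace (Ti * (T * X k'))" using trace_comm[of "T * X k'" m m Ti] T Ti Xk' by simp
    also have "\<dots> = mat_trace (X k')" using c2[OF Xk'] by simp
    finally have 1: "\<sigma> (mat_trace (X k)) = mat_trace (X k')" .
    have "\<tau> (mat_trace (X k)) = mat_trace (map_mat \<tau> (X k))" using mm_trace[OF t Xc[OF k]] by simp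
    also have "\<dots> = mat_trace (T' * X k' * Ti')" using ht[OF k'(1)] k'(2) by simp
    also have "\<dots> = mat_trace (Ti' * (T' * X k'))" using trace_comm[of "T' * X k'" m m Ti'] T' Ti' Xk' by simp
    also have "\<dots> = mat_trace (X k')" using c4[OF Xk'] by simp
    finally show ?thesis using 1 by simp
  qed
  have "S \<subseteq> {a. \<sigma> a = \<tau> a}" using Ssub trs by blast
  hence "{a. \<sigma> a = \<tau> a} = UNIV" using gen fixed_subfield[OF s t] unfolding generates_field_def by blast
  hence st: "\<sigma> = \<tau>" by auto
  have eqT: "T * X k * Ti = T' * X k * Ti'" if k: "k \<in> N" for k
    using hs[OF k] ht[OF k] st by simp
  define D where "D = Ti' * T"
  have Dc: "D \<in> carrier_mat m m" unfolding D_def using Ti' T by simp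
  have comm: "D * X k = X k * D" if k: "k \<in> N" for k
  proof -
    have Xk: "X k \<in> carrier_mat m m" using Xc[OF k] .
    have "D * X k = Ti' * ((T * X k * Ti) * T)" unfolding D_def
      using Xk cs by (simp add: assoc_mult_mat[of _ m m _ m _ m])
    also have "\<dots> = Ti' * ((T' * X k * Ti') * T)" using eqT[OF k] by simp
    also have "\<dots> = X k * D" unfolding D_def
      using Xk cs by (simp add: assoc_mult_mat[of _ m m _ m _ m])
    finally show ?thesis .
  qed
  define Q where "Q = Ti' * map_mat \<tau> x * T'"
  have sx: "map_mat \<tau> x \<in> carrier_mat m m" using x by simp
  have Qc: "Q \<in> carrier_mat m m" unfolding Q_def using Ti' T' sx by simp
  have DQ: "Q * D = D * Q" using central_from_irred[OF irr finN Xc Dc comm Qc] by simp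
  have "Ti * map_mat \<sigma> x * T = Ti * T' * Q * D" unfolding Q_def D_def st
    using sx cs by (simp add: assoc_mult_mat[of _ m m _ m _ m])
  also have "\<dots> = Ti * T' * (D * Q)" using DQ Ti T' Qc Dc by (simp add: assoc_mult_mat[of _ m m _ m _ m])
  also have "\<dots> = Q" unfolding Q_def D_def
    using sx cs by (simp add: assoc_mult_mat[of _ m m _ m _ m])
  finally show ?thesis unfolding Q_def .
qed

end

lemma zero_of_add_self:
  fixes A :: "'a::comm_ring_1 mat"
  assumes A: "A \<in> carrier_mat n n" and e: "A + A = A"
  shows "A = 0\<^sub>m n n"
proof (rule eq_matI)
  fix i j assume "i < dim_row (0\<^sub>m n n :: 'a mat)" "j < dim_col (0\<^sub>m n n :: 'a mat)"
  hence ij: "i < n" "j < n" by auto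
  have "(A + A) $$ (i, j) = A $$ (i, j)" by (simp only: e)
  moreover have "(A + A) $$ (i, j) = A $$ (i, j) + A $$ (i, j)" using A ij by simp
  ultimately show "A $$ (i, j) = 0\<^sub>m n n $$ (i, j)" using ij by simp
qed (use A in auto)

lemma emat_nz: "0 < m \<Longrightarrow> emat m 0 0 \<noteq> (0\<^sub>m m m :: 'a::comm_ring_1 mat)"
proof
  assume m: "0 < m" and e: "emat m 0 0 = (0\<^sub>m m m :: 'a mat)"
  have "(emat m 0 0 :: 'a mat) $$ (0, 0) = 1" using m by (simp add: emat_def)
  moreover have "(0\<^sub>m m m :: 'a mat) $$ (0, 0) = 0" using m by simp
  ultimately show False using e by simp
qed

lemma act_emb:
  fixes \<iota> :: "'e::field mat \<Rightarrow> 'fp::field mat"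
  assumes e: "emb m n \<iota>" and inj: "inj_on \<iota> (carrier_mat m m)"
    and s: "field_aut \<sigma>" and T: "T \<in> carrier_mat m m" and Ti: "Ti \<in> carrier_mat m m"
    and TTi: "T * Ti = 1\<^sub>m m" and TiT: "Ti * T = 1\<^sub>m m"
  shows "emb m n (\<lambda>x. \<iota> (Ti * map_mat \<sigma> x * T))"
proof -
  interpret emb m n \<iota> by (rule e)
  let ?a = "\<lambda>x. Ti * map_mat \<sigma> x * T"
  have ac: "?a x \<in> carrier_mat m m" if "x \<in> carrier_mat m m" for x using that T Ti by simp
  have c1: "T * (Ti * M) = M" if "M \<in> carrier_mat m m" for M
    using that T Ti TTi by (simp add: assoc_mult_mat[of _ m m _ m _ m, symmetric])
  show ?thesis
  proof
    show "0 < m" by (rule m_pos)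
    show "\<iota> (?a x) \<in> carrier_mat n n" if "x \<in> carrier_mat m m" for x using into[OF ac[OF that]] .
    show "\<iota> (?a (x + y)) = \<iota> (?a x) + \<iota> (?a y)" if x: "x \<in> carrier_mat m m" and y: "y \<in> carrier_mat m m" for x y
    proof -
      have "?a (x + y) = ?a x + ?a y"
        using x y T Ti by (simp add: mm_add[OF s x y] add_mult_distrib_mat[of _ m m _ _ m] mult_add_distrib_mat[of _ m m _ m])
      thus ?thesis using hadd[OF ac[OF x] ac[OF y]] by simp
    qed
    show "\<iota> (?a (x * y)) = \<iota> (?a x) * \<iota> (?a y)" if x: "x \<in> carrier_mat m m" and y: "y \<in> carrier_mat m m" for x y
    proof -
      have "?a (x * y) = ?a x * ?a y"
        using x y T Ti c1 by (simp add: mm_mult[OF s x y] assoc_mult_mat[of _ m m _ m _ m])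
      thus ?thesis using hmult[OF ac[OF x] ac[OF y]] by simp
    qed
    show "\<iota> (?a (of_nat k \<cdot>\<^sub>m x)) = of_nat k \<cdot>\<^sub>m \<iota> (?a x)" if x: "x \<in> carrier_mat m m" for k x
    proof -
      have "?a (of_nat k \<cdot>\<^sub>m x) = of_nat k \<cdot>\<^sub>m ?a x"
        using x T Ti by (simp add: mm_ofnat[OF s x] mult_smult_distrib[of _ m m _ m] mult_smult_assoc_mat[of _ m m _ m])
      thus ?thesis using hofnat[OF ac[OF x]] by simp
    qed
    show "\<iota> (?a (1\<^sub>m m)) = 1\<^sub>m n" using mm_one[OF s] TiT Ti T hone by simp
    show "\<iota> (?a (emat m 0 0)) \<noteq> 0\<^sub>m n n"
    proof
      assume z: "\<iota> (?a (emat m 0 0)) = 0\<^sub>m n n"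
      have i0: "\<iota> (0\<^sub>m m m) = 0\<^sub>m n n"
        using zero_of_add_self[OF into[of "0\<^sub>m m m"]] hadd[of "0\<^sub>m m m" "0\<^sub>m m m"] by simp
      have "?a (emat m 0 0) = 0\<^sub>m m m"
        using inj_onD[OF inj, of "?a (emat m 0 0)" "0\<^sub>m m m"] z i0 ac[of "emat m 0 0"] by simp
      hence "T * ?a (emat m 0 0) * Ti = 0\<^sub>m m m" using T Ti by simp
      moreover have "T * ?a (emat m 0 0) * Ti = map_mat \<sigma> (emat m 0 0)"
      proof -
        define E where "E = map_mat \<sigma> (emat m 0 0)"
        have Ec: "E \<in> carrier_mat m m" unfolding E_def by simp
        have ETc: "E * T \<in> carrier_mat m m" using Ec T by simp
        have "T * (Ti * E * T) * Ti = T * (Ti * (E * T)) * Ti" using assoc_mult_mat[OF Ti Ec T] by simp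
        also have "\<dots> = (E * T) * Ti" using c1[OF ETc] by simp
        also have "\<dots> = E * (T * Ti)" using assoc_mult_mat[OF Ec T Ti] .
        also have "\<dots> = E" using TTi Ec by simp
        finally show ?thesis unfolding E_def .
      qed
      ultimately have "map_mat \<sigma> (emat m 0 0) $$ (0, 0) = (0\<^sub>m m m :: 'e mat) $$ (0, 0)" by simp
      thus False using m_pos fa_1[OF s] by (simp add: emat_def)
    qed
  qed
qed

theorem mainTheorem8:
  fixes G :: "('g, 'b) monoid_scheme"
    and N :: "'g set"
    and p m s :: nat
    and X :: "'g \<Rightarrow> 'e::{field,finite} mat"
    and \<sigma> :: "'g \<Rightarrow> 'e \<Rightarrow> 'e"
    and T :: "'g \<Rightarrow> 'e mat"
    and \<iota> :: "'e mat \<Rightarrow> 'fp::{field,finite} mat"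
  assumes "group G" and "finite (carrier G)" and "N \<lhd> G"
    and "prime p" and "card (UNIV :: 'fp set) = p" and "card (UNIV :: 'e set) = p ^ s"
    \<comment> \<open>X : N \<rightarrow> GL_m(E), absolutely irreducible (affords \<theta> \<in> IBr(N))\<close>
    and "is_matrep (G\<lparr>carrier := N\<rparr>) m X"
    and "abs_irreducible N m X"
    \<comment> \<open>E = F_p[\<theta>]: E generated by the reductions of the values of \<theta> (traces on p-regular elements)\<close>
    and "generates_field {mat_trace (X n) | n. n \<in> N \<and> coprime (group.ord G n) p}"
    \<comment> \<open>G-algebra data: \<sigma>_g \<in> Gal(E/F_p), T_g \<in> GL_m(E) with X(gng^{-1})^{\<sigma>_g} = T_g X(n) T_g^{-1}\<close>
    and "\<forall>g\<in>carrier G. field_aut (\<sigma> g)"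
    and "\<forall>g\<in>carrier G. T g \<in> carrier_mat m m \<and> invertible_mat (T g)"
    and "\<forall>g\<in>carrier G. \<forall>n\<in>N.
           map_mat (\<sigma> g) (X (g \<otimes>\<^bsub>G\<^esub> n \<otimes>\<^bsub>G\<^esub> inv\<^bsub>G\<^esub> g)) = T g * X n * mat_inv (T g)"
    \<comment> \<open>\<iota> : A = M_m(E) \<rightarrow> M_{ms}(F_p) unitary F_p-algebra embedding\<close>
    and "\<forall>x\<in>carrier_mat m m. \<iota> x \<in> carrier_mat (m * s) (m * s)"
    and "\<forall>x\<in>carrier_mat m m. \<forall>y\<in>carrier_mat m m. \<iota> (x + y) = \<iota> x + \<iota> y"
    and "\<forall>x\<in>carrier_mat m m. \<forall>y\<in>carrier_mat m m. \<iota> (x * y) = \<iota> x * \<iota> y"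
    and "\<forall>k::nat. \<forall>x\<in>carrier_mat m m. \<iota> (of_nat k \<cdot>\<^sub>m x) = of_nat k \<cdot>\<^sub>m \<iota> x"
    and "\<iota> (1\<^sub>m m) = 1\<^sub>m (m * s)"
    and "inj_on \<iota> (carrier_mat m m)"
  shows "\<exists>Y :: 'g \<Rightarrow> 'fp mat.
           (\<forall>g\<in>carrier G. Y g \<in> carrier_mat (m * s) (m * s) \<and> invertible_mat (Y g)) \<and>
           (\<forall>g\<in>carrier G. \<forall>x\<in>carrier_mat m m.
              mat_inv (Y g) * \<iota> x * Y g = \<iota> (galg_act \<sigma> T g x)) \<and>
           (\<forall>n\<in>N. Y n = \<iota> (X n)) \<and>
           (\<forall>n\<in>N. \<forall>g\<in>carrier G. Y (g \<otimes>\<^bsub>G\<^esub> n) = Y g * Y n \<and> Y (n \<otimes>\<^bsub>G\<^esub> g) = Y n * Y g)"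
proof -
  interpret grp: group G by (rule assms(1))
  have sgN: "subgroup N G" using assms(3) normal_imp_subgroup by blast
  have NG: "N \<subseteq> carrier G" using subgroup.subset[OF sgN] .
  have finN: "finite N" using assms(2) NG finite_subset by blast
  have Xc: "\<And>k. k \<in> N \<Longrightarrow> X k \<in> carrier_mat m m"
    and Xinvt: "\<And>k. k \<in> N \<Longrightarrow> invertible_mat (X k)"
    and Xmul: "\<And>a b. a \<in> N \<Longrightarrow> b \<in> N \<Longrightarrow> X (a \<otimes>\<^bsub>G\<^esub> b) = X a * X b"
    using assms(7) unfolding is_matrep_def by auto
  have mpos: "0 < m" using assms(8) unfolding abs_irreducible_def by blast
  define S where "S = {mat_trace (X n) | n. n \<in> N \<and> coprime (group.ord G n) p}"
  have Ssub: "S \<subseteq> {mat_trace (X k) | k. k \<in> N}" unfolding S_def by blast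
  have genS: "generates_field S" unfolding S_def by (rule assms(9))
  have "setting G N m X S"
    by (intro setting.intro setting_axioms.intro assms(1) assms(3) finN Xc Xmul Xinvt assms(8) genS Ssub)
  then interpret st: setting G N m X S .
  define Ti where "Ti g = mat_inv (T g)" for g
  have Tc: "T g \<in> carrier_mat m m" if "g \<in> carrier G" for g using assms(11) that by blast
  have Tinv: "invertible_mat (T g)" if "g \<in> carrier G" for g using assms(11) that by blast
  have Tic: "Ti g \<in> carrier_mat m m" if "g \<in> carrier G" for g
    unfolding Ti_def using invertible_mat_inv[OF Tc[OF that] Tinv[OF that]] by blast
  have TTi: "T g * Ti g = 1\<^sub>m m" if "g \<in> carrier G" for g
    unfolding Ti_def using invertible_mat_inv[OF Tc[OF that] Tinv[OF that]] by blast
  have TiT: "Ti g * T g = 1\<^sub>m m" if "g \<in> carrier G" for g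
    unfolding Ti_def using invertible_mat_inv[OF Tc[OF that] Tinv[OF that]] by blast
  have sa: "field_aut (\<sigma> g)" if "g \<in> carrier G" for g using assms(10) that by blast
  define act where "act g x = Ti g * map_mat (\<sigma> g) x * T g" for g x
  have act_eq: "galg_act \<sigma> T g x = act g x" for g x unfolding galg_act_def act_def Ti_def by simp
  have actc: "act g x \<in> carrier_mat m m" if "g \<in> carrier G" "x \<in> carrier_mat m m" for g x
    unfolding act_def using Tc[OF that(1)] Tic[OF that(1)] that(2) by simp
  have hyp: "map_mat (\<sigma> g) (X (g \<otimes>\<^bsub>G\<^esub> k \<otimes>\<^bsub>G\<^esub> inv\<^bsub>G\<^esub> g)) = T g * X k * Ti g"
    if "g \<in> carrier G" "k \<in> N" for g k
    using assms(12) that unfolding Ti_def by blast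
  have NC: "k \<in> carrier G" if "k \<in> N" for k using NG that by blast
  have invN: "inv\<^bsub>G\<^esub> k \<in> N" if "k \<in> N" for k using subgroup.m_inv_closed[OF sgN that] .
  have mulN: "a \<otimes>\<^bsub>G\<^esub> b \<in> N" if "a \<in> N" "b \<in> N" for a b using subgroup.m_closed[OF sgN that] .
  have F1: "act (g \<otimes>\<^bsub>G\<^esub> h) x = X (inv\<^bsub>G\<^esub> h) * act g x * X h"
    if g: "g \<in> carrier G" and h: "h \<in> N" and x: "x \<in> carrier_mat m m" for g h x
  proof -
    have hc: "h \<in> carrier G" using NC[OF h] .
    have gh: "g \<otimes>\<^bsub>G\<^esub> h \<in> carrier G" using g hc by simp
    have Xh: "X h \<in> carrier_mat m m" using Xc[OF h] .
    have Xih: "X (inv\<^bsub>G\<^esub> h) \<in> carrier_mat m m" using Xc[OF invN[OF h]] .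
    note XX = st.Xinv_l[OF h] st.Xinv_r[OF h]
    have T'c: "T g * X h \<in> carrier_mat m m" using Tc[OF g] Xh by simp
    have Ti'c: "X (inv\<^bsub>G\<^esub> h) * Ti g \<in> carrier_mat m m" using Tic[OF g] Xih by simp
    have TT1: "(T g * X h) * (X (inv\<^bsub>G\<^esub> h) * Ti g) = 1\<^sub>m m"
    proof -
      have "(T g * X h) * (X (inv\<^bsub>G\<^esub> h) * Ti g) = T g * ((X h * X (inv\<^bsub>G\<^esub> h)) * Ti g)"
        using Tc[OF g] Tic[OF g] Xh Xih by (simp add: assoc_mult_mat[of _ m m _ m _ m])
      also have "\<dots> = 1\<^sub>m m" using TTi[OF g] Tic[OF g] XX by simp
      finally show ?thesis .
    qed
    have TT2: "(X (inv\<^bsub>G\<^esub> h) * Ti g) * (T g * X h) = 1\<^sub>m m"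
    proof -
      have "(X (inv\<^bsub>G\<^esub> h) * Ti g) * (T g * X h) = X (inv\<^bsub>G\<^esub> h) * ((Ti g * T g) * X h)"
        using Tc[OF g] Tic[OF g] Xh Xih by (simp add: assoc_mult_mat[of _ m m _ m _ m])
      also have "\<dots> = 1\<^sub>m m" using TiT[OF g] Xh XX by simp
      finally show ?thesis .
    qed
    have ht: "map_mat (\<sigma> g) (X ((g \<otimes>\<^bsub>G\<^esub> h) \<otimes>\<^bsub>G\<^esub> k \<otimes>\<^bsub>G\<^esub> inv\<^bsub>G\<^esub> (g \<otimes>\<^bsub>G\<^esub> h)))
        = (T g * X h) * X k * (X (inv\<^bsub>G\<^esub> h) * Ti g)" if k: "k \<in> N" for k
    proof -
      have kc: "k \<in> carrier G" using NC[OF k] .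
      have hk: "h \<otimes>\<^bsub>G\<^esub> k \<otimes>\<^bsub>G\<^esub> inv\<^bsub>G\<^esub> h \<in> N" using st.conj_in[OF hc k] .
      have e1: "(g \<otimes>\<^bsub>G\<^esub> h) \<otimes>\<^bsub>G\<^esub> k \<otimes>\<^bsub>G\<^esub> inv\<^bsub>G\<^esub> (g \<otimes>\<^bsub>G\<^esub> h) = g \<otimes>\<^bsub>G\<^esub> (h \<otimes>\<^bsub>G\<^esub> k \<otimes>\<^bsub>G\<^esub> inv\<^bsub>G\<^esub> h) \<otimes>\<^bsub>G\<^esub> inv\<^bsub>G\<^esub> g"
        using g hc kc by (simp add: grp.inv_mult_group grp.m_assoc)
      have e2: "X (h \<otimes>\<^bsub>G\<^esub> k \<otimes>\<^bsub>G\<^esub> inv\<^bsub>G\<^esub> h) = X h * X k * X (inv\<^bsub>G\<^esub> h)"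
        using Xmul[OF mulN[OF h k] invN[OF h]] Xmul[OF h k] by simp
      have "map_mat (\<sigma> g) (X ((g \<otimes>\<^bsub>G\<^esub> h) \<otimes>\<^bsub>G\<^esub> k \<otimes>\<^bsub>G\<^esub> inv\<^bsub>G\<^esub> (g \<otimes>\<^bsub>G\<^esub> h))) = T g * (X h * X k * X (inv\<^bsub>G\<^esub> h)) * Ti g"
        unfolding e1 hyp[OF g hk] e2 ..
      also have "\<dots> = (T g * X h) * X k * (X (inv\<^bsub>G\<^esub> h) * Ti g)"
        using Tc[OF g] Tic[OF g] Xh Xih Xc[OF k] by (simp add: assoc_mult_mat[of _ m m _ m _ m])
      finally show ?thesis .
    qed
    have "act (g \<otimes>\<^bsub>G\<^esub> h) x = (X (inv\<^bsub>G\<^esub> h) * Ti g) * map_mat (\<sigma> g) x * (T g * X h)"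
      unfolding act_def
      by (rule st.unique[OF gh sa[OF gh] sa[OF g] Tc[OF gh] Tic[OF gh] TTi[OF gh] TiT[OF gh] T'c Ti'c TT1 TT2 hyp[OF gh] ht x])
    also have "\<dots> = X (inv\<^bsub>G\<^esub> h) * act g x * X h"
      unfolding act_def using Tc[OF g] Tic[OF g] Xh Xih x by (simp add: assoc_mult_mat[of _ m m _ m _ m])
    finally show ?thesis .
  qed
  have F2: "act k x = X (inv\<^bsub>G\<^esub> k) * x * X k" if k: "k \<in> N" and x: "x \<in> carrier_mat m m" for k x
  proof -
    have kc: "k \<in> carrier G" using NC[OF k] .
    have ht: "map_mat (\<lambda>a. a) (X (k \<otimes>\<^bsub>G\<^esub> j \<otimes>\<^bsub>G\<^esub> inv\<^bsub>G\<^esub> k)) = X k * X j * X (inv\<^bsub>G\<^esub> k)" if j: "j \<in> N" for j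
      using Xmul[OF mulN[OF k j] invN[OF k]] Xmul[OF k j] mm_id by simp
    have "act k x = X (inv\<^bsub>G\<^esub> k) * map_mat (\<lambda>a. a) x * X k"
      unfolding act_def
      by (rule st.unique[OF kc sa[OF kc] fa_id Tc[OF kc] Tic[OF kc] TTi[OF kc] TiT[OF kc] Xc[OF k] Xc[OF invN[OF k]]
            st.Xinv_r[OF k] st.Xinv_l[OF k] hyp[OF kc] ht x])
    thus ?thesis by (simp only: mm_id[of x])
  qed
  have F3: "act t (X k) = X (inv\<^bsub>G\<^esub> t \<otimes>\<^bsub>G\<^esub> k \<otimes>\<^bsub>G\<^esub> t)" if t: "t \<in> carrier G" and k: "k \<in> N" for t k
  proof -
    define k' where "k' = inv\<^bsub>G\<^esub> t \<otimes>\<^bsub>G\<^esub> k \<otimes>\<^bsub>G\<^esub> t"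
    have k': "k' \<in> N" unfolding k'_def using st.conj_in'[OF t k] .
    have "t \<otimes>\<^bsub>G\<^esub> k' \<otimes>\<^bsub>G\<^esub> inv\<^bsub>G\<^esub> t = k" unfolding k'_def using st.conj_back[OF t NC[OF k]] .
    hence "map_mat (\<sigma> t) (X k) = T t * X k' * Ti t" using hyp[OF t k'] by simp
    hence "act t (X k) = Ti t * (T t * X k' * Ti t) * T t" unfolding act_def by simp
    also have "\<dots> = (Ti t * T t) * X k' * (Ti t * T t)"
      using Tc[OF t] Tic[OF t] Xc[OF k'] by (simp add: assoc_mult_mat[of _ m m _ m _ m])
    also have "\<dots> = X k'" using TiT[OF t] Xc[OF k'] by simp
    finally show ?thesis unfolding k'_def .
  qed
  have ic: "\<iota> x \<in> carrier_mat (m * s) (m * s)" if "x \<in> carrier_mat m m" for x using assms(13) that by blast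
  have iadd: "\<iota> (x + y) = \<iota> x + \<iota> y" if "x \<in> carrier_mat m m" "y \<in> carrier_mat m m" for x y using assms(14) that by blast
  have imul: "\<iota> (x * y) = \<iota> x * \<iota> y" if "x \<in> carrier_mat m m" "y \<in> carrier_mat m m" for x y using assms(15) that by blast
  have e1: "emb m (m * s) \<iota>"
  proof
    show "0 < m" by (rule mpos)
    show "\<iota> x \<in> carrier_mat (m * s) (m * s)" if "x \<in> carrier_mat m m" for x using ic[OF that] .
    show "\<iota> (x + y) = \<iota> x + \<iota> y" if "x \<in> carrier_mat m m" "y \<in> carrier_mat m m" for x y using iadd[OF that] .
    show "\<iota> (x * y) = \<iota> x * \<iota> y" if "x \<in> carrier_mat m m" "y \<in> carrier_mat m m" for x y using imul[OF that] .
    show "\<iota> (of_nat k \<cdot>\<^sub>m x) = of_nat k \<cdot>\<^sub>m \<iota> x" if "x \<in> carrier_mat m m" for k x using assms(16) that by blast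
    show "\<iota> (1\<^sub>m m) = 1\<^sub>m (m * s)" by (rule assms(17))
    show "\<iota> (emat m 0 0) \<noteq> 0\<^sub>m (m * s) (m * s)"
    proof
      assume z: "\<iota> (emat m 0 0) = 0\<^sub>m (m * s) (m * s)"
      have i0: "\<iota> (0\<^sub>m m m) = 0\<^sub>m (m * s) (m * s)"
        using zero_of_add_self[OF ic[of "0\<^sub>m m m"]] iadd[of "0\<^sub>m m m" "0\<^sub>m m m"] by simp
      have "emat m 0 0 = (0\<^sub>m m m :: 'e mat)"
        using inj_onD[OF assms(18), of "emat m 0 0" "0\<^sub>m m m"] z i0 by simp
      thus False using emat_nz[OF mpos] by blast
    qed
  qed
  have e2: "emb m (m * s) (\<lambda>x. \<iota> (act t x))" if t: "t \<in> carrier G" for t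
    unfolding act_def by (rule act_emb[OF e1 assms(18) sa[OF t] Tc[OF t] Tic[OF t] TTi[OF t] TiT[OF t]])
  have ofn: "\<exists>k. a = of_nat k" for a :: 'fp using fp_of_nat[OF assms(4) assms(5)] .
  have card: "card (UNIV::'e set) ^ m = card (UNIV::'fp set) ^ (m * s)"
    using assms(5) assms(6) by (simp add: power_mult[symmetric] mult.commute)
  have SN: "\<exists>Y Z. Y \<in> carrier_mat (m * s) (m * s) \<and> Z \<in> carrier_mat (m * s) (m * s) \<and>
      Y * Z = 1\<^sub>m (m * s) \<and> Z * Y = 1\<^sub>m (m * s) \<and> (\<forall>x\<in>carrier_mat m m. \<iota> x * Y = Y * \<iota> (act t x))"
    if t: "t \<in> carrier G" for t
    using skolem_noether[OF e1 e2[OF t] card ofn] by blast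
  define P0 where "P0 t Y \<longleftrightarrow> Y \<in> carrier_mat (m * s) (m * s) \<and>
      (\<exists>Z. Z \<in> carrier_mat (m * s) (m * s) \<and> Y * Z = 1\<^sub>m (m * s) \<and> Z * Y = 1\<^sub>m (m * s)) \<and>
      (\<forall>x\<in>carrier_mat m m. \<iota> x * Y = Y * \<iota> (act t x))" for t Y
  define Y0 where "Y0 t = (if t \<in> N then \<iota> (X t) else (SOME Y. P0 t Y))" for t
  have Y0N: "Y0 t = \<iota> (X t)" if "t \<in> N" for t unfolding Y0_def using that by simp
  have iX: "\<iota> (X k) \<in> carrier_mat (m * s) (m * s)" if "k \<in> N" for k using ic[OF Xc[OF that]] .
  have iXX: "\<iota> (X k) * \<iota> (X (inv\<^bsub>G\<^esub> k)) = 1\<^sub>m (m * s)" "\<iota> (X (inv\<^bsub>G\<^esub> k)) * \<iota> (X k) = 1\<^sub>m (m * s)"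
    if k: "k \<in> N" for k
    using imul[OF Xc[OF k] Xc[OF invN[OF k]]] imul[OF Xc[OF invN[OF k]] Xc[OF k]] st.Xinv_l[OF k] st.Xinv_r[OF k] assms(17)
    by simp_all
  have Y0P: "P0 t (Y0 t)" if t: "t \<in> carrier G" for t
  proof (cases "t \<in> N")
    case True
    have "\<iota> x * \<iota> (X t) = \<iota> (X t) * \<iota> (act t x)" if x: "x \<in> carrier_mat m m" for x
    proof -
      have Xt: "X t \<in> carrier_mat m m" and Xit: "X (inv\<^bsub>G\<^esub> t) \<in> carrier_mat m m" using Xc True invN by auto
      have "X t * act t x = x * X t"
      proof -
        have "X t * act t x = (X t * X (inv\<^bsub>G\<^esub> t)) * x * X t"
          unfolding F2[OF True x] using Xt Xit x by (simp add: assoc_mult_mat[of _ m m _ m _ m])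
        also have "\<dots> = x * X t" using st.Xinv_r[OF True] x by simp
        finally show ?thesis .
      qed
      thus ?thesis using imul[OF Xt actc[OF t x]] imul[OF x Xt] by simp
    qed
    thus ?thesis unfolding P0_def Y0N[OF True] using iX[OF True] iX[OF invN[OF True]] iXX[OF True] by blast
  next
    case False
    have "\<exists>Y. P0 t Y" using SN[OF t] unfolding P0_def by blast
    hence "P0 t (SOME Y. P0 t Y)" by (rule someI_ex)
    thus ?thesis unfolding Y0_def using False by simp
  qed
  define Z0 where "Z0 t = (SOME Z. Z \<in> carrier_mat (m * s) (m * s) \<and> Y0 t * Z = 1\<^sub>m (m * s) \<and> Z * Y0 t = 1\<^sub>m (m * s))" for t
  have Y0c: "Y0 t \<in> carrier_mat (m * s) (m * s)" if "t \<in> carrier G" for t using Y0P[OF that] unfolding P0_def by blast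
  have Z0P: "Z0 t \<in> carrier_mat (m * s) (m * s) \<and> Y0 t * Z0 t = 1\<^sub>m (m * s) \<and> Z0 t * Y0 t = 1\<^sub>m (m * s)"
    if "t \<in> carrier G" for t
  proof -
    have "\<exists>Z. Z \<in> carrier_mat (m * s) (m * s) \<and> Y0 t * Z = 1\<^sub>m (m * s) \<and> Z * Y0 t = 1\<^sub>m (m * s)"
      using Y0P[OF that] unfolding P0_def by blast
    thus ?thesis unfolding Z0_def by (rule someI_ex)
  qed
  have Y0int: "\<iota> x * Y0 t = Y0 t * \<iota> (act t x)" if "t \<in> carrier G" "x \<in> carrier_mat m m" for t x
    using Y0P[OF that(1)] that(2) unfolding P0_def by blast
  have cancel: "a \<otimes>\<^bsub>G\<^esub> (inv\<^bsub>G\<^esub> a \<otimes>\<^bsub>G\<^esub> b) = b" if "a \<in> carrier G" "b \<in> carrier G" for a b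
    using that by (simp add: grp.m_assoc[symmetric])
  have Nl: "a \<otimes>\<^bsub>G\<^esub> b \<in> N \<longleftrightarrow> b \<in> N" if a: "a \<in> N" and b: "b \<in> carrier G" for a b
  proof
    assume "a \<otimes>\<^bsub>G\<^esub> b \<in> N"
    hence "inv\<^bsub>G\<^esub> a \<otimes>\<^bsub>G\<^esub> (a \<otimes>\<^bsub>G\<^esub> b) \<in> N" using mulN invN a by blast
    thus "b \<in> N" using a b NC by (simp add: grp.m_assoc[symmetric])
  qed (use mulN a in blast)
  have Nr: "b \<otimes>\<^bsub>G\<^esub> a \<in> N \<longleftrightarrow> b \<in> N" if a: "a \<in> N" and b: "b \<in> carrier G" for a b
  proof
    assume "b \<otimes>\<^bsub>G\<^esub> a \<in> N"
    hence "(b \<otimes>\<^bsub>G\<^esub> a) \<otimes>\<^bsub>G\<^esub> inv\<^bsub>G\<^esub> a \<in> N" using mulN invN a by blast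
    thus "b \<in> N" using a b NC by (simp add: grp.m_assoc)
  qed (use mulN a in blast)
  define r where "r g = (SOME t. t \<in> carrier G \<and> inv\<^bsub>G\<^esub> t \<otimes>\<^bsub>G\<^esub> g \<in> N)" for g
  have r_prop: "r g \<in> carrier G \<and> inv\<^bsub>G\<^esub> (r g) \<otimes>\<^bsub>G\<^esub> g \<in> N" if g: "g \<in> carrier G" for g
  proof -
    have "g \<in> carrier G \<and> inv\<^bsub>G\<^esub> g \<otimes>\<^bsub>G\<^esub> g \<in> N" using g subgroup.one_closed[OF sgN] by simp
    thus ?thesis unfolding r_def by (rule someI)
  qed
  have r_eq: "r g = r g'" if "\<And>t. t \<in> carrier G \<Longrightarrow> (inv\<^bsub>G\<^esub> t \<otimes>\<^bsub>G\<^esub> g \<in> N \<longleftrightarrow> inv\<^bsub>G\<^esub> t \<otimes>\<^bsub>G\<^esub> g' \<in> N)" for g g'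
  proof -
    have "(\<lambda>t. t \<in> carrier G \<and> inv\<^bsub>G\<^esub> t \<otimes>\<^bsub>G\<^esub> g \<in> N) = (\<lambda>t. t \<in> carrier G \<and> inv\<^bsub>G\<^esub> t \<otimes>\<^bsub>G\<^esub> g' \<in> N)"
      using that by blast
    thus ?thesis unfolding r_def by simp
  qed
  have r_right: "r (g \<otimes>\<^bsub>G\<^esub> k) = r g" if g: "g \<in> carrier G" and k: "k \<in> N" for g k
  proof (rule r_eq)
    fix t assume t: "t \<in> carrier G"
    have "inv\<^bsub>G\<^esub> t \<otimes>\<^bsub>G\<^esub> (g \<otimes>\<^bsub>G\<^esub> k) = (inv\<^bsub>G\<^esub> t \<otimes>\<^bsub>G\<^esub> g) \<otimes>\<^bsub>G\<^esub> k"
      using t g NC[OF k] by (simp add: grp.m_assoc)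
    thus "inv\<^bsub>G\<^esub> t \<otimes>\<^bsub>G\<^esub> (g \<otimes>\<^bsub>G\<^esub> k) \<in> N \<longleftrightarrow> inv\<^bsub>G\<^esub> t \<otimes>\<^bsub>G\<^esub> g \<in> N"
      using Nr[OF k, of "inv\<^bsub>G\<^esub> t \<otimes>\<^bsub>G\<^esub> g"] t g by simp
  qed
  have r_left: "r (k \<otimes>\<^bsub>G\<^esub> g) = r g" if g: "g \<in> carrier G" and k: "k \<in> N" for g k
  proof (rule r_eq)
    fix t assume t: "t \<in> carrier G"
    have "inv\<^bsub>G\<^esub> t \<otimes>\<^bsub>G\<^esub> (k \<otimes>\<^bsub>G\<^esub> g) = (inv\<^bsub>G\<^esub> t \<otimes>\<^bsub>G\<^esub> k \<otimes>\<^bsub>G\<^esub> t) \<otimes>\<^bsub>G\<^esub> (inv\<^bsub>G\<^esub> t \<otimes>\<^bsub>G\<^esub> g)"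
      using t g NC[OF k] cancel by (simp add: grp.m_assoc)
    thus "inv\<^bsub>G\<^esub> t \<otimes>\<^bsub>G\<^esub> (k \<otimes>\<^bsub>G\<^esub> g) \<in> N \<longleftrightarrow> inv\<^bsub>G\<^esub> t \<otimes>\<^bsub>G\<^esub> g \<in> N"
      using Nl[OF st.conj_in'[OF t k], of "inv\<^bsub>G\<^esub> t \<otimes>\<^bsub>G\<^esub> g"] t g by simp
  qed
  define Y where "Y g = Y0 (r g) * \<iota> (X (inv\<^bsub>G\<^esub> (r g) \<otimes>\<^bsub>G\<^esub> g))" for g
  let ?d = "m * s"
  have assoc3: "A * B * C = A * (B * C)" if "A \<in> carrier_mat ?d ?d" "B \<in> carrier_mat ?d ?d" "C \<in> carrier_mat ?d ?d"
    for A B C :: "'fp mat" using assoc_mult_mat[OF that] .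
  have YN: "Y k = \<iota> (X k)" if k: "k \<in> N" for k
  proof -
    have kc: "k \<in> carrier G" using NC[OF k] .
    define t where "t = r k"
    have t: "t \<in> carrier G" "inv\<^bsub>G\<^esub> t \<otimes>\<^bsub>G\<^esub> k \<in> N" using r_prop[OF kc] unfolding t_def by auto
    have "inv\<^bsub>G\<^esub> t \<in> N" using Nr[OF k, of "inv\<^bsub>G\<^esub> t"] t by simp
    hence tN: "t \<in> N" using invN t(1) by fastforce
    have "Y k = \<iota> (X t) * \<iota> (X (inv\<^bsub>G\<^esub> t \<otimes>\<^bsub>G\<^esub> k))" unfolding Y_def t_def[symmetric] Y0N[OF tN] ..
    also have "\<dots> = \<iota> (X (t \<otimes>\<^bsub>G\<^esub> (inv\<^bsub>G\<^esub> t \<otimes>\<^bsub>G\<^esub> k)))"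
      using imul[OF Xc[OF tN] Xc[OF t(2)]] Xmul[OF tN t(2)] by simp
    also have "t \<otimes>\<^bsub>G\<^esub> (inv\<^bsub>G\<^esub> t \<otimes>\<^bsub>G\<^esub> k) = k" using cancel[OF t(1) kc] .
    finally show ?thesis .
  qed
  have Yprops: "Y g \<in> carrier_mat ?d ?d \<and> invertible_mat (Y g) \<and>
      (\<forall>x\<in>carrier_mat m m. mat_inv (Y g) * \<iota> x * Y g = \<iota> (galg_act \<sigma> T g x))" if g: "g \<in> carrier G" for g
  proof -
    define t where "t = r g"
    define h where "h = inv\<^bsub>G\<^esub> t \<otimes>\<^bsub>G\<^esub> g"
    have t: "t \<in> carrier G" and h: "h \<in> N" using r_prop[OF g] unfolding t_def h_def by auto
    have gth: "g = t \<otimes>\<^bsub>G\<^esub> h" unfolding h_def using cancel[OF t g] by simp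
    have Yg: "Y g = Y0 t * \<iota> (X h)" unfolding Y_def t_def[symmetric] h_def[symmetric] ..
    have Y0t: "Y0 t \<in> carrier_mat ?d ?d" using Y0c[OF t] .
    have Z0t: "Z0 t \<in> carrier_mat ?d ?d" "Y0 t * Z0 t = 1\<^sub>m ?d" "Z0 t * Y0 t = 1\<^sub>m ?d" using Z0P[OF t] by auto
    have iXh: "\<iota> (X h) \<in> carrier_mat ?d ?d" using iX[OF h] .
    have iXih: "\<iota> (X (inv\<^bsub>G\<^esub> h)) \<in> carrier_mat ?d ?d" using iX[OF invN[OF h]] .
    define B where "B = \<iota> (X (inv\<^bsub>G\<^esub> h)) * Z0 t"
    have Bc: "B \<in> carrier_mat ?d ?d" unfolding B_def using iXih Z0t by simp
    have Ygc: "Y g \<in> carrier_mat ?d ?d" unfolding Yg using Y0t iXh by simp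
    have YB: "Y g * B = 1\<^sub>m ?d"
    proof -
      have "Y g * B = Y0 t * ((\<iota> (X h) * \<iota> (X (inv\<^bsub>G\<^esub> h))) * Z0 t)"
        unfolding Yg B_def using Y0t iXh iXih Z0t(1) by (simp add: assoc_mult_mat[of _ ?d ?d _ ?d _ ?d])
      also have "\<dots> = 1\<^sub>m ?d" using iXX[OF h] Z0t by simp
      finally show ?thesis .
    qed
    have BY: "B * Y g = 1\<^sub>m ?d"
    proof -
      have "B * Y g = \<iota> (X (inv\<^bsub>G\<^esub> h)) * ((Z0 t * Y0 t) * \<iota> (X h))"
        unfolding Yg B_def using Y0t iXh iXih Z0t(1) by (simp add: assoc_mult_mat[of _ ?d ?d _ ?d _ ?d])
      also have "\<dots> = 1\<^sub>m ?d" using iXX[OF h] Z0t iXh by simp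
      finally show ?thesis .
    qed
    have inv: "invertible_mat (Y g)"
      unfolding invertible_mat_def inverts_mat_def using Ygc Bc YB BY by (intro conjI exI[of _ B]) auto
    have mi: "mat_inv (Y g) = B" using mat_inv_unique[OF Ygc Bc YB BY] .
    have conj: "mat_inv (Y g) * \<iota> x * Y g = \<iota> (galg_act \<sigma> T g x)" if x: "x \<in> carrier_mat m m" for x
    proof -
      have ix: "\<iota> x \<in> carrier_mat ?d ?d" using ic[OF x] .
      have iax: "\<iota> (act t x) \<in> carrier_mat ?d ?d" using ic[OF actc[OF t x]] .
      have "mat_inv (Y g) * \<iota> x * Y g = \<iota> (X (inv\<^bsub>G\<^esub> h)) * (Z0 t * (\<iota> x * Y0 t) * \<iota> (X h))"
        unfolding mi unfolding B_def Yg using iXih Z0t(1) ix Y0t iXh by (simp add: assoc_mult_mat[of _ ?d ?d _ ?d _ ?d])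
      also have "\<dots> = \<iota> (X (inv\<^bsub>G\<^esub> h)) * ((Z0 t * Y0 t) * \<iota> (act t x) * \<iota> (X h))"
        unfolding Y0int[OF t x] using iXih Z0t(1) iax Y0t iXh by (simp add: assoc_mult_mat[of _ ?d ?d _ ?d _ ?d])
      also have "\<dots> = \<iota> (X (inv\<^bsub>G\<^esub> h)) * \<iota> (act t x) * \<iota> (X h)"
        using Z0t(3) iax iXh iXih by (simp add: assoc_mult_mat[of _ ?d ?d _ ?d _ ?d])
      also have "\<dots> = \<iota> (X (inv\<^bsub>G\<^esub> h) * act t x * X h)"
        using imul[OF Xc[OF invN[OF h]] actc[OF t x]] imul[OF mult_carrier_mat[OF Xc[OF invN[OF h]] actc[OF t x]] Xc[OF h]] by simp
      also have "\<dots> = \<iota> (act (t \<otimes>\<^bsub>G\<^esub> h) x)" using F1[OF t h x] by simp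
      finally show ?thesis unfolding act_eq gth[symmetric] .
    qed
    show ?thesis using Ygc inv conj by blast
  qed
  have Ymul: "Y (g \<otimes>\<^bsub>G\<^esub> k) = Y g * Y k \<and> Y (k \<otimes>\<^bsub>G\<^esub> g) = Y k * Y g" if k: "k \<in> N" and g: "g \<in> carrier G" for k g
  proof -
    define t where "t = r g"
    define h where "h = inv\<^bsub>G\<^esub> t \<otimes>\<^bsub>G\<^esub> g"
    have t: "t \<in> carrier G" and h: "h \<in> N" using r_prop[OF g] unfolding t_def h_def by auto
    have kc: "k \<in> carrier G" using NC[OF k] .
    have Yg: "Y g = Y0 t * \<iota> (X h)" unfolding Y_def t_def[symmetric] h_def[symmetric] ..
    have Y0t: "Y0 t \<in> carrier_mat ?d ?d" using Y0c[OF t] .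
    have iXh: "\<iota> (X h) \<in> carrier_mat ?d ?d" using iX[OF h] .
    have iXk: "\<iota> (X k) \<in> carrier_mat ?d ?d" using iX[OF k] .
    have A: "Y (g \<otimes>\<^bsub>G\<^esub> k) = Y g * Y k"
    proof -
      have "inv\<^bsub>G\<^esub> t \<otimes>\<^bsub>G\<^esub> (g \<otimes>\<^bsub>G\<^esub> k) = h \<otimes>\<^bsub>G\<^esub> k" unfolding h_def using t g kc by (simp add: grp.m_assoc)
      hence "Y (g \<otimes>\<^bsub>G\<^esub> k) = Y0 t * \<iota> (X (h \<otimes>\<^bsub>G\<^esub> k))" unfolding Y_def r_right[OF g k] t_def by simp
      also have "\<dots> = Y0 t * (\<iota> (X h) * \<iota> (X k))" using Xmul[OF h k] imul[OF Xc[OF h] Xc[OF k]] by simp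
      also have "\<dots> = Y g * Y k" unfolding Yg YN[OF k] using assoc3[OF Y0t iXh iXk] by simp
      finally show ?thesis .
    qed
    have B: "Y (k \<otimes>\<^bsub>G\<^esub> g) = Y k * Y g"
    proof -
      define k' where "k' = inv\<^bsub>G\<^esub> t \<otimes>\<^bsub>G\<^esub> k \<otimes>\<^bsub>G\<^esub> t"
      have k': "k' \<in> N" unfolding k'_def using st.conj_in'[OF t k] .
      have "inv\<^bsub>G\<^esub> t \<otimes>\<^bsub>G\<^esub> (k \<otimes>\<^bsub>G\<^esub> g) = k' \<otimes>\<^bsub>G\<^esub> h" unfolding h_def k'_def using t g kc cancel by (simp add: grp.m_assoc)
      hence "Y (k \<otimes>\<^bsub>G\<^esub> g) = Y0 t * \<iota> (X (k' \<otimes>\<^bsub>G\<^esub> h))" unfolding Y_def r_left[OF g k] t_def by simp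
      also have "\<dots> = Y0 t * (\<iota> (X k') * \<iota> (X h))" using Xmul[OF k' h] imul[OF Xc[OF k'] Xc[OF h]] by simp
      also have "\<dots> = (Y0 t * \<iota> (act t (X k))) * \<iota> (X h)"
        using assoc3[OF Y0t iX[OF k'] iXh] F3[OF t k] unfolding k'_def by simp
      also have "\<dots> = (\<iota> (X k) * Y0 t) * \<iota> (X h)" using Y0int[OF t Xc[OF k]] by simp
      also have "\<dots> = Y k * Y g" unfolding Yg YN[OF k] using assoc3[OF iXk Y0t iXh] by simp
      finally show ?thesis .
    qed
    show ?thesis using A B by blast
  qed
  show ?thesis
    by (rule exI[of _ Y]) (use Yprops YN Ymul in blast)
qed

end
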